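(* Let $\delta\in(0,1]$ and let $G=(V,E)$ be a simple graph on $n$ vertices with minimal degree at least $\delta n$. Then there exists a $\delta$-primary decomposition of $G$.
   Context: $\deg(v,U)$ denotes the number of edges between $v$ and $U$, and $G[U]$ the induced subgraph. The spectral gap of a graph is $1-\lambda_2$, $\lambda_2$ the second largest eigenvalue of the transition matrix of its simple random walk. For $G$ on $n$ vertices with minimal degree at least $\delta n$, a $\delta$-primary decomposition is a partition $V=V_1\sqcup\dots\sqcup V_k$ such that: (1) $k\le 2/\delta$; (2) $|V_i|\ge\delta n/2$ for every $i\in[k]$; (3) for every $i\in[k]$ and $v\in V_i$, $\deg(v,V_i)\ge \delta^4 n/40$; (4) for every $i\in[k]$, the spectral gap of $G[V_i]$ is at least $\delta^{10}/2^{22}$. *)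

theory Defs
  imports "Jordan_Normal_Form.Char_Poly" "HOL-Computational_Algebra.Polynomial"
begin

definition simple_graph :: "('a \<Rightarrow> 'a \<Rightarrow> bool) \<Rightarrow> 'a set \<Rightarrow> bool" where
  "simple_graph E V \<longleftrightarrow> finite V \<and> (\<forall>u v. E u v \<longrightarrow> u \<in> V \<and> v \<in> V)
     \<and> (\<forall>u v. E u v \<longrightarrow> E v u) \<and> (\<forall>v. \<not> E v v)"

definition deg :: "('a \<Rightarrow> 'a \<Rightarrow> bool) \<Rightarrow> 'a \<Rightarrow> 'a set \<Rightarrow> nat" where
  "deg E v U = card {u \<in> U. E v u}"

text \<open>Transition matrix of the simple random walk on the induced subgraph G[U],
  w.r.t. a fixed enumeration of U (eigenvalues do not depend on it).\<close>
definition enum_of :: "'a set \<Rightarrow> 'a list" where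
  "enum_of U = (SOME xs. set xs = U \<and> distinct xs)"

definition walk_matrix :: "('a \<Rightarrow> 'a \<Rightarrow> bool) \<Rightarrow> 'a set \<Rightarrow> real mat" where
  "walk_matrix E U = (let xs = enum_of U in
     mat (length xs) (length xs)
       (\<lambda>(i, j). if E (xs ! i) (xs ! j) then 1 / real (deg E (xs ! i) U) else 0))"

definition eigenvalues_desc :: "real mat \<Rightarrow> real list" where
  "eigenvalues_desc A = rev (sorted_list_of_multiset (proots (char_poly A)))"

definition lambda2 :: "('a \<Rightarrow> 'a \<Rightarrow> bool) \<Rightarrow> 'a set \<Rightarrow> real" where
  "lambda2 E U = eigenvalues_desc (walk_matrix E U) ! 1"

definition spectral_gap :: "('a \<Rightarrow> 'a \<Rightarrow> bool) \<Rightarrow> 'a set \<Rightarrow> real" where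
  "spectral_gap E U = 1 - lambda2 E U"

definition primary_decomposition ::
  "('a \<Rightarrow> 'a \<Rightarrow> bool) \<Rightarrow> 'a set \<Rightarrow> real \<Rightarrow> nat \<Rightarrow> (nat \<Rightarrow> 'a set) \<Rightarrow> bool" where
  "primary_decomposition E V \<delta> k Vs \<longleftrightarrow>
     (\<forall>i<k. Vs i \<noteq> {} \<and> Vs i \<subseteq> V) \<and> (\<Union>i<k. Vs i) = V \<and>
     (\<forall>i<k. \<forall>j<k. i \<noteq> j \<longrightarrow> Vs i \<inter> Vs j = {}) \<and>
     real k \<le> 2 / \<delta> \<and>
     (\<forall>i<k. real (card (Vs i)) \<ge> \<delta> * real (card V) / 2) \<and>
     (\<forall>i<k. \<forall>v\<in>Vs i. real (deg E v (Vs i)) \<ge> \<delta> ^ 4 * real (card V) / 40) \<and>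
     (\<forall>i<k. spectral_gap E (Vs i) \<ge> \<delta> ^ 10 / 2 ^ 22)"

end

theory Submission
  imports Defs "HOL-Library.FuncSet" "Jordan_Normal_Form.Jordan_Normal_Form_Existence" "Jordan_Normal_Form.Jordan_Normal_Form_Uniqueness"
begin


definition eind :: "('a \<Rightarrow> 'a \<Rightarrow> bool) \<Rightarrow> 'a \<Rightarrow> 'a \<Rightarrow> real" where
  "eind E x y = (if E x y then 1 else 0)"

lemma sum_split_sym:
  fixes D :: "'a \<Rightarrow> 'a \<Rightarrow> real"
  assumes fin: "finite V" and SV: "S \<subseteq> V"
    and inS: "\<And>x y. x \<in> S \<Longrightarrow> y \<in> S \<Longrightarrow> D x y = 0"
    and outS: "\<And>x y. x \<in> V - S \<Longrightarrow> y \<in> V - S \<Longrightarrow> D x y = 0"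
    and sym: "\<And>x y. D x y = D y x"
  shows "(\<Sum>x\<in>V. \<Sum>y\<in>V. D x y) = 2 * (\<Sum>x\<in>S. \<Sum>y\<in>V - S. D x y)"
proof -
  have finS: "finite S" using fin SV by (rule rev_finite_subset)
  have split: "\<And>h :: 'a \<Rightarrow> real. (\<Sum>y\<in>V. h y) = (\<Sum>y\<in>S. h y) + (\<Sum>y\<in>V - S. h y)"
    using fin SV by (metis add.commute sum.subset_diff)
  have "(\<Sum>x\<in>V. \<Sum>y\<in>V. D x y) = (\<Sum>x\<in>V. (\<Sum>y\<in>S. D x y) + (\<Sum>y\<in>V - S. D x y))"
    by (simp add: split[symmetric])
  also have "\<dots> = (\<Sum>x\<in>S. (\<Sum>y\<in>S. D x y) + (\<Sum>y\<in>V - S. D x y)) + (\<Sum>x\<in>V - S. (\<Sum>y\<in>S. D x y) + (\<Sum>y\<in>V - S. D x y))"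
    by (rule split)
  also have "(\<Sum>x\<in>S. (\<Sum>y\<in>S. D x y) + (\<Sum>y\<in>V - S. D x y)) = (\<Sum>x\<in>S. \<Sum>y\<in>V - S. D x y)"
    using inS by (simp add: sum.distrib)
  also have "(\<Sum>x\<in>V - S. (\<Sum>y\<in>S. D x y) + (\<Sum>y\<in>V - S. D x y)) = (\<Sum>x\<in>V - S. \<Sum>y\<in>S. D x y)"
    using outS by (simp add: sum.distrib)
  also have "(\<Sum>x\<in>V - S. \<Sum>y\<in>S. D x y) = (\<Sum>y\<in>S. \<Sum>x\<in>V - S. D x y)"
    by (rule sum.swap)
  also have "\<dots> = (\<Sum>x\<in>S. \<Sum>y\<in>V - S. D x y)"
    using sym by simp
  finally show ?thesis by simp
qed

context
  fixes E :: "'a \<Rightarrow> 'a \<Rightarrow> bool" and V :: "'a set" and \<phi> :: real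
begin

definition lwt :: "('a \<Rightarrow> nat) \<Rightarrow> 'a \<Rightarrow> 'a \<Rightarrow> real" where
  "lwt c x y = (if c x = c y then \<phi> else eind E x y)"

definition lPsi :: "('a \<Rightarrow> nat) \<Rightarrow> real" where
  "lPsi c = (\<Sum>x\<in>V. \<Sum>y\<in>V. lwt c x y)"

definition lpart :: "('a \<Rightarrow> nat) \<Rightarrow> nat \<Rightarrow> 'a set" where
  "lpart c l = {x\<in>V. c x = l}"

definition llabs :: "nat \<Rightarrow> ('a \<Rightarrow> nat) set" where
  "llabs N = V \<rightarrow>\<^sub>E {..<N}"

definition eedge :: "'a set \<Rightarrow> 'a set \<Rightarrow> real" where
  "eedge A B = (\<Sum>x\<in>A. \<Sum>y\<in>B. eind E x y)"

context
  assumes fin: "finite V" and Esym: "\<And>x y. E x y \<Longrightarrow> E y x" and Eirr: "\<And>x. \<not> E x x"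
begin

lemma ind_sym: "eind E x y = eind E y x"
  unfolding eind_def using Esym by auto

lemma move_diff:
  assumes ab: "a \<noteq> b" and S: "S \<subseteq> lpart c a"
  defines "c' \<equiv> (\<lambda>x. if x \<in> S then b else c x)"
  shows "lPsi c' - lPsi c = 2 * ((\<Sum>x\<in>S. \<Sum>y\<in>lpart c a - S. eind E x y - \<phi>) + (\<Sum>x\<in>S. \<Sum>y\<in>lpart c b. \<phi> - eind E x y))"
proof -
  have SV: "S \<subseteq> V" using S unfolding lpart_def by auto
  have ca: "\<And>x. x \<in> S \<Longrightarrow> c x = a" using S unfolding lpart_def by auto
  define D where "D = (\<lambda>x y. lwt c' x y - lwt c x y)"
  have "lPsi c' - lPsi c = (\<Sum>x\<in>V. \<Sum>y\<in>V. D x y)"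
    unfolding lPsi_def D_def by (simp add: sum_subtractf)
  also have "\<dots> = 2 * (\<Sum>x\<in>S. \<Sum>y\<in>V - S. D x y)"
  proof (rule sum_split_sym[OF fin SV])
    show "\<And>x y. x \<in> S \<Longrightarrow> y \<in> S \<Longrightarrow> D x y = 0"
      unfolding D_def lwt_def c'_def using ca by auto
    show "\<And>x y. x \<in> V - S \<Longrightarrow> y \<in> V - S \<Longrightarrow> D x y = 0"
      unfolding D_def lwt_def c'_def by auto
    show "\<And>x y. D x y = D y x"
      unfolding D_def lwt_def using ind_sym by (auto simp: eq_commute)
  qed
  also have "(\<Sum>x\<in>S. \<Sum>y\<in>V - S. D x y) = (\<Sum>x\<in>S. \<Sum>y\<in>V - S. (if c y = b then \<phi> - eind E x y else 0) + (if c y = a then eind E x y - \<phi> else 0))"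
  proof (intro sum.cong refl)
    fix x y assume x: "x \<in> S" and y: "y \<in> V - S"
    show "D x y = (if c y = b then \<phi> - eind E x y else 0) + (if c y = a then eind E x y - \<phi> else 0)"
      unfolding D_def lwt_def c'_def using x y ca[OF x] ab by auto
  qed
  also have "\<dots> = (\<Sum>x\<in>S. (\<Sum>y\<in>lpart c b. \<phi> - eind E x y) + (\<Sum>y\<in>lpart c a - S. eind E x y - \<phi>))"
  proof (intro sum.cong refl)
    fix x assume x: "x \<in> S"
    have f: "finite (V - S)" using fin by auto
    have e1: "{y \<in> V - S. c y = b} = lpart c b" unfolding lpart_def using ca ab by auto
    have e2: "{y \<in> V - S. c y = a} = lpart c a - S" unfolding lpart_def by auto
    show "(\<Sum>y\<in>V - S. (if c y = b then \<phi> - eind E x y else 0) + (if c y = a then eind E x y - \<phi> else 0)) = (\<Sum>y\<in>lpart c b. \<phi> - eind E x y) + (\<Sum>y\<in>lpart c a - S. eind E x y - \<phi>)"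
      unfolding sum.distrib sum.inter_filter[OF f, symmetric] e1 e2 ..
  qed
  finally show ?thesis by (simp add: sum.distrib)
qed


lemma labs_move:
  assumes c: "c \<in> llabs N" and b: "b < N" and SV: "S \<subseteq> V"
  shows "(\<lambda>x. if x \<in> S then b else c x) \<in> llabs N"
  using c b SV unfolding llabs_def by (auto simp: PiE_def Pi_def extensional_def)

lemma exists_min:
  assumes "N > 0"
  shows "\<exists>c\<in>llabs N. \<forall>c'\<in>llabs N. lPsi c \<le> lPsi c'"
proof -
  have f: "finite (llabs N)" unfolding llabs_def using fin by (intro finite_PiE) auto
  have "(\<lambda>x\<in>V. 0) \<in> llabs N" unfolding llabs_def using assms by auto
  then have ne: "llabs N \<noteq> {}" by auto
  have "Min (lPsi ` llabs N) \<in> lPsi ` llabs N" using f ne by (intro Min_in) auto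
  then obtain c where "c \<in> llabs N" "lPsi c = Min (lPsi ` llabs N)" by auto
  then show ?thesis using f by (metis Min_le finite_imageI image_eqI)
qed

lemma min_move:
  assumes c: "c \<in> llabs N" and cmin: "\<forall>c'\<in>llabs N. lPsi c \<le> lPsi c'"
    and ab: "a \<noteq> b" and b: "b < N" and S: "S \<subseteq> lpart c a"
  shows "0 \<le> (\<Sum>x\<in>S. \<Sum>y\<in>lpart c a - S. eind E x y - \<phi>) + (\<Sum>x\<in>S. \<Sum>y\<in>lpart c b. \<phi> - eind E x y)"
proof -
  have SV: "S \<subseteq> V" using S unfolding lpart_def by auto
  have "lPsi c \<le> lPsi (\<lambda>x. if x \<in> S then b else c x)"
    using cmin labs_move[OF c b SV] by auto
  then have "0 \<le> lPsi (\<lambda>x. if x \<in> S then b else c x) - lPsi c" by simp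
  also note move_diff[OF ab S]
  finally show ?thesis by simp
qed

lemma ind_nn: "eind E x y \<ge> 0" unfolding eind_def by auto
lemma ind_le1: "eind E x y \<le> 1" unfolding eind_def by auto

lemma sum_ind_phi: "(\<Sum>x\<in>A. \<Sum>y\<in>B. eind E x y - \<phi>) = eedge A B - \<phi> * card A * card B"
  unfolding eedge_def by (simp add: sum_subtractf)

lemma sum_phi_ind: "(\<Sum>x\<in>A. \<Sum>y\<in>B. \<phi> - eind E x y) = \<phi> * card A * card B - eedge A B"
  unfolding eedge_def by (simp add: sum_subtractf)

lemma part_sub: "lpart c a \<subseteq> V" unfolding lpart_def by auto
lemma part_fin: "finite (lpart c a)" using fin part_sub by (rule rev_finite_subset)

lemma free_label:
  assumes c: "c \<in> llabs N" and N: "N > card V"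
  shows "\<exists>b<N. lpart c b = {}"
proof -
  have "card (c ` V) \<le> card V" using fin by (rule card_image_le)
  also have "\<dots> < card {..<N}" using N by simp
  finally have "\<not> {..<N} \<subseteq> c ` V" by (meson card_mono finite_imageI fin not_le)
  then obtain b where "b < N" "b \<notin> c ` V" by auto
  then show ?thesis unfolding lpart_def by auto
qed

lemma min_split:
  assumes c: "c \<in> llabs N" and cmin: "\<forall>c'\<in>llabs N. lPsi c \<le> lPsi c'" and N: "N > card V"
    and S: "S \<subseteq> lpart c a"
  shows "\<phi> * card S * card (lpart c a - S) \<le> eedge S (lpart c a - S)"
proof -
  obtain b where b: "b < N" "lpart c b = {}" using free_label[OF c N] by auto
  show ?thesis
  proof (cases "a = b")
    case True
    then have "S = {}" using S b by auto
    then show ?thesis unfolding eedge_def by simp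
  next
    case False
    from min_move[OF c cmin False b(1) S] show ?thesis
      unfolding sum_ind_phi sum_phi_ind b(2) by (simp add: eedge_def)
  qed
qed

lemma min_merge:
  assumes c: "c \<in> llabs N" and cmin: "\<forall>c'\<in>llabs N. lPsi c \<le> lPsi c'"
    and ab: "a \<noteq> b" and b: "b < N"
  shows "eedge (lpart c a) (lpart c b) \<le> \<phi> * card (lpart c a) * card (lpart c b)"
  using min_move[OF c cmin ab b order_refl] unfolding sum_ind_phi sum_phi_ind by (simp add: eedge_def)

lemma min_vertex:
  assumes c: "c \<in> llabs N" and cmin: "\<forall>c'\<in>llabs N. lPsi c \<le> lPsi c'"
    and b: "b < N" and v: "v \<in> lpart c a" and phi: "\<phi> \<ge> 0"
  shows "(\<Sum>y\<in>lpart c b. eind E v y) \<le> (\<Sum>y\<in>lpart c a. eind E v y) + \<phi> * card (lpart c b)"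
proof (cases "a = b")
  case True
  then show ?thesis using phi by simp
next
  case False
  have S: "{v} \<subseteq> lpart c a" using v by auto
  from min_move[OF c cmin False b S]
  have "0 \<le> eedge {v} (lpart c a - {v}) - \<phi> * card (lpart c a - {v}) + (\<phi> * card (lpart c b) - eedge {v} (lpart c b))"
    unfolding sum_ind_phi sum_phi_ind by simp
  moreover have "eedge {v} (lpart c a - {v}) \<le> (\<Sum>y\<in>lpart c a. eind E v y)"
    unfolding eedge_def using part_fin by (simp add: sum_mono2 ind_nn)
  moreover have "\<phi> * card (lpart c a - {v}) \<ge> 0" using phi by simp
  moreover have "eedge {v} (lpart c b) = (\<Sum>y\<in>lpart c b. eind E v y)" unfolding eedge_def by simp
  ultimately show ?thesis by linarith
qed

lemma group_parts:
  assumes c: "c \<in> llabs N"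
  shows "(\<Sum>y\<in>V. g y) = (\<Sum>b<N. \<Sum>y\<in>lpart c b. g y)"
proof -
  have "c ` V \<subseteq> {..<N}" using c unfolding llabs_def by auto
  then have "(\<Sum>b\<in>{..<N}. sum g {y \<in> V. c y = b}) = sum g V"
    using fin by (intro sum.group) auto
  then show ?thesis unfolding lpart_def by simp
qed

lemma group_parts_other:
  fixes g :: "'a \<Rightarrow> real"
  assumes c: "c \<in> llabs N" and a: "a < N"
  shows "(\<Sum>y\<in>V - lpart c a. g y) = (\<Sum>b\<in>{..<N} - {a}. \<Sum>y\<in>lpart c b. g y)"
proof -
  have "(\<Sum>y\<in>V. g y) = (\<Sum>y\<in>lpart c a. g y) + (\<Sum>y\<in>V - lpart c a. g y)"
    using fin part_sub by (metis add.commute sum.subset_diff)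
  moreover have "(\<Sum>b<N. \<Sum>y\<in>lpart c b. g y) = (\<Sum>y\<in>lpart c a. g y) + (\<Sum>b\<in>{..<N} - {a}. \<Sum>y\<in>lpart c b. g y)"
    using a by (simp add: sum.remove)
  ultimately show ?thesis using group_parts[OF c, of g] by simp
qed

lemma sum_part_cards:
  assumes c: "c \<in> llabs N"
  shows "(\<Sum>b<N. real (card (lpart c b))) = real (card V)"
  using group_parts[OF c, of "\<lambda>_. 1::real"] by simp


lemma comb_size:
  fixes \<delta> :: real
  assumes \<delta>: "0 < \<delta>" and phi: "\<phi> \<ge> 0"
    and mindeg: "\<forall>v\<in>V. \<delta> * card V \<le> (\<Sum>y\<in>V. eind E v y)"
    and c: "c \<in> llabs N" and cmin: "\<forall>c'\<in>llabs N. lPsi c \<le> lPsi c'" and a: "a < N"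
    and ne: "lpart c a \<noteq> {}"
  shows "(\<delta> - \<phi>) * card V \<le> card (lpart c a)"
proof -
  define P where "P = lpart c a"
  define p where "p = real (card P)"
  define n where "n = real (card V)"
  have pos: "p > 0" unfolding p_def P_def using ne part_fin by (simp add: card_gt_0_iff)
  have "p * (\<delta> * n) = (\<Sum>x\<in>P. \<delta> * n)" unfolding p_def by simp
  also have "\<dots> \<le> (\<Sum>x\<in>P. \<Sum>y\<in>V. eind E x y)"
    using mindeg part_sub unfolding P_def n_def by (intro sum_mono) auto
  also have "\<dots> = (\<Sum>x\<in>P. (\<Sum>y\<in>P. eind E x y) + (\<Sum>y\<in>V - P. eind E x y))"
    using fin part_sub unfolding P_def by (intro sum.cong refl) (metis add.commute sum.subset_diff)
  also have "\<dots> = eedge P P + (\<Sum>x\<in>P. \<Sum>b\<in>{..<N} - {a}. \<Sum>y\<in>lpart c b. eind E x y)"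
    unfolding eedge_def P_def group_parts_other[OF c a] by (simp add: sum.distrib)
  also have "(\<Sum>x\<in>P. \<Sum>b\<in>{..<N} - {a}. \<Sum>y\<in>lpart c b. eind E x y) = (\<Sum>b\<in>{..<N} - {a}. eedge P (lpart c b))"
    unfolding eedge_def by (rule sum.swap)
  also have "\<dots> \<le> (\<Sum>b\<in>{..<N} - {a}. \<phi> * p * card (lpart c b))"
    unfolding P_def p_def using min_merge[OF c cmin] by (intro sum_mono) auto
  also have "\<dots> = \<phi> * p * (\<Sum>b\<in>{..<N} - {a}. real (card (lpart c b)))"
    by (simp add: sum_distrib_left)
  also have "(\<Sum>b\<in>{..<N} - {a}. real (card (lpart c b))) = n - p"
  proof -
    have "(\<Sum>b<N. real (card (lpart c b))) = real (card (lpart c a)) + (\<Sum>b\<in>{..<N} - {a}. real (card (lpart c b)))"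
      using a by (simp add: sum.remove)
    then show ?thesis using sum_part_cards[OF c] unfolding n_def p_def P_def by simp
  qed
  also have "eedge P P \<le> p * p"
  proof -
    have "eedge P P \<le> (\<Sum>x\<in>P. \<Sum>y\<in>P. (1::real))" unfolding eedge_def
      by (intro sum_mono) (simp add: ind_le1)
    then show ?thesis unfolding p_def by simp
  qed
  finally have "p * (\<delta> * n) \<le> p * p + \<phi> * p * (n - p)" by simp
  moreover have "\<phi> * p * (n - p) \<le> \<phi> * p * n" using phi pos by (simp add: mult_left_mono)
  ultimately have "p * (\<delta> * n) \<le> p * (p + \<phi> * n)" by (simp add: algebra_simps)
  then have "\<delta> * n \<le> p + \<phi> * n" using pos by simp
  then show ?thesis unfolding p_def n_def P_def by (simp add: algebra_simps)
qed

lemma comb_deg: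
  fixes \<delta> :: real
  assumes \<delta>: "0 < \<delta>" "\<delta> \<le> 1" and phi: "\<phi> = \<delta>^2/4"
    and mindeg: "\<forall>v\<in>V. \<delta> * card V \<le> (\<Sum>y\<in>V. eind E v y)"
    and c: "c \<in> llabs N" and cmin: "\<forall>c'\<in>llabs N. lPsi c \<le> lPsi c'" and a: "a < N"
    and v: "v \<in> lpart c a"
  shows "\<delta>^2 / 2 * card V \<le> (\<Sum>y\<in>lpart c a. eind E v y)"
proof -
  define n where "n = real (card V)"
  define dg where "dg = (\<Sum>y\<in>lpart c a. eind E v y)"
  define L where "L = {b\<in>{..<N}. lpart c b \<noteq> {}}"
  have phi0: "\<phi> \<ge> 0" unfolding phi by simp
  have dphi: "\<delta> - \<phi> > 0"
  proof -
    have "\<delta> * \<delta> \<le> 1 * \<delta>" using \<delta> by (intro mult_right_mono) auto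
    then show ?thesis unfolding phi using \<delta> by (simp add: power2_eq_square)
  qed
  have dgnn: "dg \<ge> 0" unfolding dg_def by (simp add: sum_nonneg ind_nn)
  have n0: "n \<ge> 0" unfolding n_def by simp
  have LN: "L \<subseteq> {..<N}" unfolding L_def by auto
  have vV: "v \<in> V" using v part_sub by auto
  have "\<delta> * n \<le> (\<Sum>y\<in>V. eind E v y)" using mindeg vV unfolding n_def by auto
  also have "\<dots> = (\<Sum>b<N. \<Sum>y\<in>lpart c b. eind E v y)" by (rule group_parts[OF c])
  also have "\<dots> = (\<Sum>b\<in>L. \<Sum>y\<in>lpart c b. eind E v y)"
    using LN unfolding L_def by (intro sum.mono_neutral_right) auto
  also have "\<dots> \<le> (\<Sum>b\<in>L. dg + \<phi> * n)"
  proof (intro sum_mono)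
    fix b assume "b \<in> L"
    then have b: "b < N" unfolding L_def by auto
    have "card (lpart c b) \<le> card V" using fin part_sub by (rule card_mono)
    then have "\<phi> * card (lpart c b) \<le> \<phi> * n" unfolding n_def using phi0 by (simp add: mult_left_mono)
    then show "(\<Sum>y\<in>lpart c b. eind E v y) \<le> dg + \<phi> * n"
      using min_vertex[OF c cmin b v phi0] unfolding dg_def by linarith
  qed
  also have "\<dots> = card L * (dg + \<phi> * n)" by simp
  finally have A: "\<delta> * n \<le> card L * (dg + \<phi> * n)" .
  have B: "card L * (\<delta> - \<phi>) \<le> 1"
  proof (cases "n = 0")
    case True
    then have "V = {}" unfolding n_def using fin by simp
    then have "L = {}" unfolding L_def lpart_def by auto
    then show ?thesis by simp
  next
    case False
    then have npos: "n > 0" using n0 by simp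
    have "card L * ((\<delta> - \<phi>) * n) = (\<Sum>b\<in>L. (\<delta> - \<phi>) * n)" by simp
    also have "\<dots> \<le> (\<Sum>b\<in>L. real (card (lpart c b)))"
    proof (intro sum_mono)
      fix b assume "b \<in> L"
      then have "b < N" "lpart c b \<noteq> {}" unfolding L_def by auto
      then show "(\<delta> - \<phi>) * n \<le> real (card (lpart c b))"
        using comb_size[OF \<delta>(1) phi0 mindeg c cmin] unfolding n_def by auto
    qed
    also have "\<dots> = (\<Sum>b<N. real (card (lpart c b)))"
      using LN unfolding L_def by (intro sum.mono_neutral_left) auto
    also have "\<dots> = n" using sum_part_cards[OF c] unfolding n_def .
    finally have "(card L * (\<delta> - \<phi>)) * n \<le> 1 * n" by (simp add: algebra_simps)
    then show ?thesis using npos by (simp only: mult_le_cancel_right)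
  qed
  have "(\<delta> - \<phi>) * (\<delta> * n) \<le> (\<delta> - \<phi>) * (card L * (dg + \<phi> * n))"
    using A dphi by (intro mult_left_mono) auto
  also have "\<dots> = (card L * (\<delta> - \<phi>)) * (dg + \<phi> * n)" by (simp add: algebra_simps)
  also have "\<dots> \<le> 1 * (dg + \<phi> * n)"
    using B dgnn phi0 n0 by (intro mult_right_mono) auto
  finally have C: "(\<delta> - \<phi>) * (\<delta> * n) - \<phi> * n \<le> dg" by simp
  have "\<delta>^2 / 2 * n \<le> (\<delta> - \<phi>) * (\<delta> * n) - \<phi> * n"
  proof -
    have "(\<delta> - \<phi>) * (\<delta> * n) - \<phi> * n - \<delta>^2 / 2 * n = n * (\<delta>^2 * (1 - \<delta>) / 4)"
      unfolding phi by (simp add: power2_eq_square algebra_simps)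
    also have "\<dots> \<ge> 0" using n0 \<delta> by simp
    finally show ?thesis by simp
  qed
  then show ?thesis using C unfolding n_def dg_def by linarith
qed


lemma comb_exists:
  fixes \<delta> :: real
  assumes \<delta>: "0 < \<delta>" "\<delta> \<le> 1" and phi: "\<phi> = \<delta>^2/4"
    and mindeg: "\<forall>v\<in>V. \<delta> * card V \<le> (\<Sum>y\<in>V. eind E v y)"
  shows "\<exists>c N. (\<forall>x\<in>V. c x < N) \<and> (\<forall>a<N. lpart c a \<noteq> {} \<longrightarrow>
            \<delta> * card V / 2 \<le> card (lpart c a) \<and>
            (\<forall>v\<in>lpart c a. \<delta>^2 / 2 * card V \<le> (\<Sum>y\<in>lpart c a. eind E v y)) \<and>
            (\<forall>S. S \<subseteq> lpart c a \<longrightarrow> \<phi> * card S * card (lpart c a - S) \<le> eedge S (lpart c a - S)))"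
proof -
  define N where "N = card V + 1"
  obtain c where c: "c \<in> llabs N" and cmin: "\<forall>c'\<in>llabs N. lPsi c \<le> lPsi c'"
    using exists_min[of N] unfolding N_def by auto
  have phi0: "\<phi> \<ge> 0" unfolding phi by simp
  have NV: "N > card V" unfolding N_def by simp
  have cN: "\<forall>x\<in>V. c x < N" using c unfolding llabs_def by auto
  have "\<forall>a<N. lpart c a \<noteq> {} \<longrightarrow>
            \<delta> * card V / 2 \<le> card (lpart c a) \<and>
            (\<forall>v\<in>lpart c a. \<delta>^2 / 2 * card V \<le> (\<Sum>y\<in>lpart c a. eind E v y)) \<and>
            (\<forall>S. S \<subseteq> lpart c a \<longrightarrow> \<phi> * card S * card (lpart c a - S) \<le> eedge S (lpart c a - S))"
  proof (intro allI impI)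
    fix a assume a: "a < N" and ne: "lpart c a \<noteq> {}"
    have "(\<delta> - \<phi>) * card V \<le> card (lpart c a)" by (rule comb_size[OF \<delta>(1) phi0 mindeg c cmin a ne])
    moreover have "\<delta> * card V / 2 \<le> (\<delta> - \<phi>) * card V"
    proof -
      have "\<delta> * \<delta> \<le> 1 * \<delta>" using \<delta> by (intro mult_right_mono) auto
      then have "\<delta> / 2 \<le> \<delta> - \<phi>" unfolding phi power2_eq_square using \<delta> by linarith
      then have "\<delta> / 2 * card V \<le> (\<delta> - \<phi>) * card V" by (intro mult_right_mono) auto
      then show ?thesis by simp
    qed
    ultimately have A: "\<delta> * card V / 2 \<le> card (lpart c a)" by linarith
    have B: "\<forall>v\<in>lpart c a. \<delta>^2 / 2 * card V \<le> (\<Sum>y\<in>lpart c a. eind E v y)"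
      using comb_deg[OF \<delta> phi mindeg c cmin a] by blast
    have C: "\<forall>S. S \<subseteq> lpart c a \<longrightarrow> \<phi> * card S * card (lpart c a - S) \<le> eedge S (lpart c a - S)"
      using min_split[OF c cmin NV] by blast
    show "\<delta> * card V / 2 \<le> card (lpart c a) \<and>
            (\<forall>v\<in>lpart c a. \<delta>^2 / 2 * card V \<le> (\<Sum>y\<in>lpart c a. eind E v y)) \<and>
            (\<forall>S. S \<subseteq> lpart c a \<longrightarrow> \<phi> * card S * card (lpart c a - S) \<le> eedge S (lpart c a - S))"
      using A B C by blast
  qed
  then show ?thesis using cN by blast
qed

end

end




definition pospart :: "real \<Rightarrow> real" where "pospart t = max t 0"

lemma L1_lemma:
  fixes W :: "'b set" and r :: "'b \<Rightarrow> 'b \<Rightarrow> real" and \<phi> :: real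
  assumes fin: "finite W" and \<phi>: "\<phi> \<ge> 0" and rnn: "\<And>x y. r x y \<ge> 0"
    and cut: "\<And>S. S \<subseteq> W \<Longrightarrow> \<phi> * real (card S) * real (card (W - S)) \<le> (\<Sum>x\<in>S. \<Sum>y\<in>W - S. r x y)"
  shows "\<phi> * (\<Sum>x\<in>W. \<Sum>y\<in>W. pospart (g y - g x)) \<le> (\<Sum>x\<in>W. \<Sum>y\<in>W. r x y * pospart (g y - g x))"
proof (induction "card (g ` W)" arbitrary: g rule: less_induct)
  case less
  show ?case
  proof (cases "card (g ` W) \<le> 1")
    case True
    have "\<forall>x\<in>W. \<forall>y\<in>W. g x = g y"
    proof (intro ballI)
      fix x y assume "x \<in> W" "y \<in> W"
      then have "g x \<in> g ` W" "g y \<in> g ` W" by auto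
      have "card (g ` W) \<le> Suc 0" using True by simp
      then have "\<forall>a\<in>g`W. \<forall>b\<in>g`W. a = b" using card_le_Suc0_iff_eq[of "g ` W"] fin by blast
      then show "g x = g y" using \<open>g x \<in> g ` W\<close> \<open>g y \<in> g ` W\<close> by blast
    qed
    then have "\<And>x y. x \<in> W \<Longrightarrow> y \<in> W \<Longrightarrow> pospart (g y - g x) = 0"
    proof -
      fix x y assume "\<forall>x\<in>W. \<forall>y\<in>W. g x = g y" "x \<in> W" "y \<in> W"
      then have "g y = g x" by blast
      then show "pospart (g y - g x) = 0" by (simp add: pospart_def)
    qed
    then show ?thesis by simp
  next
    case False
    define M where "M = Max (g ` W)"
    have fgW: "finite (g ` W)" using fin by auto
    have neW: "g ` W \<noteq> {}" using False by auto
    have MW: "M \<in> g ` W" unfolding M_def using fgW neW by auto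
    have Mge: "\<And>x. x \<in> W \<Longrightarrow> g x \<le> M" unfolding M_def using fgW by auto
    have ne2: "g ` W - {M} \<noteq> {}"
    proof
      assume "g ` W - {M} = {}"
      then have "g ` W \<subseteq> {M}" by auto
      then have "card (g ` W) \<le> card {M}" by (intro card_mono) auto
      then have "card (g ` W) \<le> 1" by simp
      with False show False by simp
    qed
    define M' where "M' = Max (g ` W - {M})"
    have M'W: "M' \<in> g ` W - {M}" unfolding M'_def using fgW ne2 by (intro Max_in) auto
    have M'lt: "M' < M" using M'W Mge by force
    have M'ge: "\<And>x. x \<in> W \<Longrightarrow> g x \<noteq> M \<Longrightarrow> g x \<le> M'" unfolding M'_def using fgW by auto
    define g' where "g' = (\<lambda>x. if g x = M then M' else g x)"
    define T where "T = {x\<in>W. g x = M}"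
    have TW: "T \<subseteq> W" unfolding T_def by auto
    have img: "g' ` W = g ` W - {M}"
    proof
      show "g' ` W \<subseteq> g ` W - {M}" using M'W M'lt unfolding g'_def by auto
      show "g ` W - {M} \<subseteq> g' ` W"
      proof
        fix z assume "z \<in> g ` W - {M}"
        then obtain x where "x \<in> W" "g x = z" "z \<noteq> M" by auto
        then show "z \<in> g' ` W" unfolding g'_def by (auto intro!: image_eqI[of _ _ x])
      qed
    qed
    have lt: "card (g' ` W) < card (g ` W)" unfolding img using MW fgW
      by (meson card_Diff1_less)
    note IH = less(1)[OF lt]
    have dec: "\<And>x y. x \<in> W \<Longrightarrow> y \<in> W \<Longrightarrow> pospart (g y - g x) = pospart (g' y - g' x) + (if x \<notin> T \<and> y \<in> T then M - M' else 0)"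
    proof -
      fix x y assume xW: "x \<in> W" and yW: "y \<in> W"
      show "pospart (g y - g x) = pospart (g' y - g' x) + (if x \<notin> T \<and> y \<in> T then M - M' else 0)"
        using M'ge[OF xW] M'ge[OF yW] Mge[OF xW] Mge[OF yW] M'lt xW yW
        unfolding pospart_def g'_def T_def by auto
    qed
    have s1: "(\<Sum>x\<in>W. \<Sum>y\<in>W. pospart (g y - g x)) = (\<Sum>x\<in>W. \<Sum>y\<in>W. pospart (g' y - g' x)) + (\<Sum>x\<in>W. \<Sum>y\<in>W. (if x \<notin> T \<and> y \<in> T then M - M' else 0))"
      by (simp add: dec sum.distrib)
    have s2: "(\<Sum>x\<in>W. \<Sum>y\<in>W. r x y * pospart (g y - g x)) = (\<Sum>x\<in>W. \<Sum>y\<in>W. r x y * pospart (g' y - g' x)) + (\<Sum>x\<in>W. \<Sum>y\<in>W. (if x \<notin> T \<and> y \<in> T then (M - M') * r x y else 0))"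
    proof -
      have pw: "\<And>x y. x \<in> W \<Longrightarrow> y \<in> W \<Longrightarrow> r x y * pospart (g y - g x) = r x y * pospart (g' y - g' x) + (if x \<notin> T \<and> y \<in> T then (M - M') * r x y else 0)"
        by (simp add: dec algebra_simps)
      have "(\<Sum>x\<in>W. \<Sum>y\<in>W. r x y * pospart (g y - g x)) = (\<Sum>x\<in>W. \<Sum>y\<in>W. r x y * pospart (g' y - g' x) + (if x \<notin> T \<and> y \<in> T then (M - M') * r x y else 0))"
        by (intro sum.cong refl) (simp add: pw)
      then show ?thesis by (simp add: sum.distrib)
    qed
    have if1: "\<And>h :: 'b \<Rightarrow> 'b \<Rightarrow> real. (\<Sum>x\<in>W. \<Sum>y\<in>W. (if x \<notin> T \<and> y \<in> T then h x y else 0)) = (\<Sum>x\<in>W - T. \<Sum>y\<in>T. h x y)"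
    proof -
      fix h :: "'b \<Rightarrow> 'b \<Rightarrow> real"
      have "(\<Sum>x\<in>W. \<Sum>y\<in>W. (if x \<notin> T \<and> y \<in> T then h x y else 0)) = (\<Sum>x\<in>W. if x \<notin> T then (\<Sum>y\<in>W. if y \<in> T then h x y else 0) else 0)"
        by (intro sum.cong refl) auto
      also have "\<dots> = (\<Sum>x\<in>{x\<in>W. x \<notin> T}. (\<Sum>y\<in>W. if y \<in> T then h x y else 0))"
        using fin by (simp add: sum.inter_filter)
      also have "{x\<in>W. x \<notin> T} = W - T" by auto
      also have "(\<Sum>x\<in>W - T. (\<Sum>y\<in>W. if y \<in> T then h x y else 0)) = (\<Sum>x\<in>W - T. (\<Sum>y\<in>{y\<in>W. y \<in> T}. h x y))"
        using fin by (simp add: sum.inter_filter)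
      also have "{y\<in>W. y \<in> T} = T" using TW by auto
      finally show "(\<Sum>x\<in>W. \<Sum>y\<in>W. (if x \<notin> T \<and> y \<in> T then h x y else 0)) = (\<Sum>x\<in>W - T. \<Sum>y\<in>T. h x y)" .
    qed
    have WT: "W - (W - T) = T" using TW by auto
    have c: "\<phi> * real (card (W - T)) * real (card T) \<le> (\<Sum>x\<in>W - T. \<Sum>y\<in>T. r x y)"
      using cut[of "W - T"] WT by auto
    have "\<phi> * (\<Sum>x\<in>W - T. \<Sum>y\<in>T. M - M') = (M - M') * (\<phi> * real (card (W - T)) * real (card T))"
      by simp
    also have "\<dots> \<le> (M - M') * (\<Sum>x\<in>W - T. \<Sum>y\<in>T. r x y)"
      using c M'lt by (intro mult_left_mono) auto
    also have "\<dots> = (\<Sum>x\<in>W - T. \<Sum>y\<in>T. (M - M') * r x y)"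
      by (simp add: sum_distrib_left)
    finally have c2: "\<phi> * (\<Sum>x\<in>W - T. \<Sum>y\<in>T. M - M') \<le> (\<Sum>x\<in>W - T. \<Sum>y\<in>T. (M - M') * r x y)" .
    show ?thesis
      unfolding s1 s2 if1 distrib_left using IH c2 by linarith
  qed
qed

lemma amgm_abs: fixes a b t :: real assumes "t > 0"
  shows "2 * \<bar>a\<bar> * \<bar>b\<bar> \<le> t * a^2 + b^2 / t"
proof -
  have "0 \<le> (t * \<bar>a\<bar> - \<bar>b\<bar>)^2 / t" using assms by simp
  also have "(t * \<bar>a\<bar> - \<bar>b\<bar>)^2 / t = t * a^2 - 2 * \<bar>a\<bar> * \<bar>b\<bar> + b^2 / t"
    using assms by (simp add: power2_eq_square field_simps)
  finally show ?thesis by simp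
qed

lemma sq_lemma:
  fixes W :: "'b set" and r :: "'b \<Rightarrow> 'b \<Rightarrow> real" and \<phi> :: real and h :: "'b \<Rightarrow> real"
  assumes fin: "finite W" and \<phi>: "\<phi> > 0" and rnn: "\<And>x y. r x y \<ge> 0" and rle: "\<And>x y. r x y \<le> 1"
    and cut: "\<And>S. S \<subseteq> W \<Longrightarrow> \<phi> * real (card S) * real (card (W - S)) \<le> (\<Sum>x\<in>S. \<Sum>y\<in>W - S. r x y)"
    and hnn: "\<And>x. x \<in> W \<Longrightarrow> h x \<ge> 0"
    and zeros: "real (card W) \<le> 2 * real (card {x\<in>W. h x = 0})"
  shows "\<phi>^2 * real (card W) * (\<Sum>x\<in>W. (h x)^2) \<le> 16 * (\<Sum>x\<in>W. \<Sum>y\<in>W. r x y * (h y - h x)^2)"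
proof -
  define G where "G = (\<lambda>x. (h x)^2)"
  define Z where "Z = {x\<in>W. h x = 0}"
  define Q where "Q = (\<Sum>x\<in>W. (h x)^2)"
  define A where "A = (\<Sum>x\<in>W. \<Sum>y\<in>W. r x y * (h y - h x)^2)"
  define m where "m = real (card W)"
  have Qnn: "Q \<ge> 0" unfolding Q_def by (intro sum_nonneg) auto
  have L1: "\<phi> * (\<Sum>x\<in>W. \<Sum>y\<in>W. pospart (G y - G x)) \<le> (\<Sum>x\<in>W. \<Sum>y\<in>W. r x y * pospart (G y - G x))"
    using L1_lemma[OF fin _ rnn cut] \<phi> by auto
  have ZW: "Z \<subseteq> W" unfolding Z_def by auto
  have low: "real (card Z) * Q \<le> (\<Sum>x\<in>W. \<Sum>y\<in>W. pospart (G y - G x))"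
  proof -
    have "real (card Z) * Q = (\<Sum>x\<in>Z. \<Sum>y\<in>W. pospart (G y - G x))"
    proof -
      have "\<And>x y. x \<in> Z \<Longrightarrow> pospart (G y - G x) = G y"
        unfolding Z_def G_def pospart_def by auto
      then have "(\<Sum>x\<in>Z. \<Sum>y\<in>W. pospart (G y - G x)) = (\<Sum>x\<in>Z. Q)"
        unfolding Q_def G_def by (intro sum.cong refl) simp
      then show ?thesis by simp
    qed
    also have "\<dots> \<le> (\<Sum>x\<in>W. \<Sum>y\<in>W. pospart (G y - G x))"
      using fin ZW by (intro sum_mono2) (auto intro!: sum_nonneg simp: pospart_def)
    finally show ?thesis .
  qed
  define t where "t = 8 / \<phi>"
  have t: "t > 0" unfolding t_def using \<phi> by simp
  have pw: "\<And>x y. x \<in> W \<Longrightarrow> y \<in> W \<Longrightarrow> r x y * pospart (G y - G x) \<le> (t/2) * (r x y * (h y - h x)^2) + (1/t) * (r x y * ((h y)^2 + (h x)^2))"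
  proof -
    fix x y assume xW: "x \<in> W" and yW: "y \<in> W"
    have "pospart (G y - G x) \<le> \<bar>h y - h x\<bar> * \<bar>h y + h x\<bar>"
      unfolding pospart_def G_def by (auto simp: abs_mult[symmetric] power2_eq_square algebra_simps)
    also have "\<dots> \<le> (t * (h y - h x)^2 + (h y + h x)^2 / t) / 2"
      using amgm_abs[OF t, of "h y - h x" "h y + h x"] by simp
    also have "\<dots> \<le> (t * (h y - h x)^2 + 2 * ((h y)^2 + (h x)^2) / t) / 2"
    proof -
      have e: "(h y + h x)^2 = 2 * ((h y)^2 + (h x)^2) - (h y - h x)^2" by (simp add: power2_eq_square algebra_simps)
      have q: "(h y + h x)^2 \<le> 2 * ((h y)^2 + (h x)^2)" unfolding e by simp
      show ?thesis using q t by (intro divide_right_mono add_left_mono) auto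
    qed
    also have "\<dots> = (t/2) * (h y - h x)^2 + (1/t) * ((h y)^2 + (h x)^2)" by simp
    finally have "pospart (G y - G x) \<le> (t/2) * (h y - h x)^2 + (1/t) * ((h y)^2 + (h x)^2)" .
    then have "r x y * pospart (G y - G x) \<le> r x y * ((t/2) * (h y - h x)^2 + (1/t) * ((h y)^2 + (h x)^2))"
      using rnn by (intro mult_left_mono) auto
    then show "r x y * pospart (G y - G x) \<le> (t/2) * (r x y * (h y - h x)^2) + (1/t) * (r x y * ((h y)^2 + (h x)^2))"
      by (simp add: algebra_simps)
  qed
  have B: "(\<Sum>x\<in>W. \<Sum>y\<in>W. r x y * ((h y)^2 + (h x)^2)) \<le> 2 * m * Q"
  proof -
    have "(\<Sum>x\<in>W. \<Sum>y\<in>W. r x y * ((h y)^2 + (h x)^2)) \<le> (\<Sum>x\<in>W. \<Sum>y\<in>W. ((h y)^2 + (h x)^2))"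
      using rle rnn by (intro sum_mono) (auto intro!: mult_left_le_one_le)
    also have "\<dots> = (\<Sum>x\<in>W. Q) + (\<Sum>x\<in>W. \<Sum>y\<in>W. (h x)^2)"
      unfolding Q_def by (simp add: sum.distrib)
    also have "\<dots> = 2 * m * Q" unfolding Q_def m_def by (simp add: sum_distrib_left[symmetric])
    finally show ?thesis .
  qed
  have up: "(\<Sum>x\<in>W. \<Sum>y\<in>W. r x y * pospart (G y - G x)) \<le> (t/2) * A + (1/t) * (2 * m * Q)"
  proof -
    have "(\<Sum>x\<in>W. \<Sum>y\<in>W. r x y * pospart (G y - G x)) \<le> (\<Sum>x\<in>W. \<Sum>y\<in>W. (t/2) * (r x y * (h y - h x)^2) + (1/t) * (r x y * ((h y)^2 + (h x)^2)))"
      using pw by (intro sum_mono) auto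
    also have "\<dots> = (t/2) * A + (1/t) * (\<Sum>x\<in>W. \<Sum>y\<in>W. r x y * ((h y)^2 + (h x)^2))"
      unfolding A_def by (simp add: sum.distrib sum_distrib_left)
    also have "\<dots> \<le> (t/2) * A + (1/t) * (2 * m * Q)"
      using B t by (intro add_left_mono mult_left_mono) auto
    finally show ?thesis .
  qed
  have zz: "m * Q \<le> 2 * real (card Z) * Q" using zeros Qnn unfolding m_def Z_def
    by (simp add: mult_right_mono)
  have "\<phi> * (m * Q) \<le> \<phi> * (2 * real (card Z) * Q)" using zz \<phi> by (intro mult_left_mono) auto
  also have "\<dots> = 2 * (\<phi> * (real (card Z) * Q))" by simp
  also have "\<dots> \<le> 2 * (\<phi> * (\<Sum>x\<in>W. \<Sum>y\<in>W. pospart (G y - G x)))"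
    using low \<phi> by simp
  also have "\<dots> \<le> 2 * ((t/2) * A + (1/t) * (2 * m * Q))" using L1 up by simp
  also have "\<dots> = 8 * A / \<phi> + \<phi> * (m * Q) / 2" unfolding t_def using \<phi> by (simp add: field_simps)
  finally have "\<phi> * (m * Q) / 2 \<le> 8 * A / \<phi>" by simp
  then have "\<phi> * (m * Q) \<le> 16 * A / \<phi>" by simp
  then have "\<phi> * (\<phi> * (m * Q)) \<le> \<phi> * (16 * A / \<phi>)" using \<phi> by (intro mult_left_mono) auto
  also have "\<phi> * (16 * A / \<phi>) = 16 * A" using \<phi> by simp
  finally have "\<phi>^2 * (m * Q) \<le> 16 * A" by (simp add: power2_eq_square mult.assoc)
  then show ?thesis unfolding m_def Q_def A_def by (simp add: mult.assoc)
qed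

lemma median_exists:
  fixes W :: "'b set" and f :: "'b \<Rightarrow> real"
  assumes fin: "finite W" and ne: "W \<noteq> {}"
  shows "\<exists>c. 2 * card {x\<in>W. f x < c} \<le> card W \<and> 2 * card {x\<in>W. c < f x} \<le> card W"
proof -
  define C where "C = {c\<in>f ` W. 2 * card {x\<in>W. f x < c} \<le> card W}"
  have fC: "finite C" unfolding C_def using fin by auto
  have "Min (f ` W) \<in> C"
  proof -
    have "{x\<in>W. f x < Min (f ` W)} = {}" using fin by (auto simp: not_less intro: Min_le)
    then have "2 * card {x\<in>W. f x < Min (f ` W)} \<le> card W" by (simp only: card.empty)
    moreover have "Min (f ` W) \<in> f ` W" using fin ne by (intro Min_in) auto
    ultimately show ?thesis unfolding C_def by blast
  qed
  then have neC: "C \<noteq> {}" by auto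
  define c where "c = Max C"
  have cC: "c \<in> C" unfolding c_def using fC neC by (rule Max_in)
  have cmax: "\<And>c'. c' \<in> C \<Longrightarrow> c' \<le> c" unfolding c_def using fC by auto
  have "2 * card {x\<in>W. c < f x} \<le> card W"
  proof (rule ccontr)
    assume A: "\<not> 2 * card {x\<in>W. c < f x} \<le> card W"
    then have neG: "{x\<in>W. c < f x} \<noteq> {}" by (metis card.empty mult_0_right zero_le)
    define c' where "c' = Min (f ` {x\<in>W. c < f x})"
    have fin2: "finite (f ` {x\<in>W. c < f x})" using fin by auto
    have c'in: "c' \<in> f ` {x\<in>W. c < f x}" unfolding c'_def using fin2 neG by (intro Min_in) auto
    have c'le: "\<And>x. x \<in> W \<Longrightarrow> c < f x \<Longrightarrow> c' \<le> f x" unfolding c'_def using fin2 by auto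
    have c'gt: "c < c'" using c'in by auto
    have "c' \<notin> C" using cmax c'gt by force
    then have B: "2 * card {x\<in>W. f x < c'} > card W" using c'in unfolding C_def by auto
    have eq: "{x\<in>W. f x < c'} = {x\<in>W. f x \<le> c}"
      using c'le c'gt by force
    have "card {x\<in>W. f x \<le> c} + card {x\<in>W. c < f x} = card ({x\<in>W. f x \<le> c} \<union> {x\<in>W. c < f x})"
      using fin by (intro card_Un_disjoint[symmetric]) auto
    also have "\<dots> \<le> card W" using fin by (intro card_mono) auto
    finally show False using A B[unfolded eq] by linarith
  qed
  then show ?thesis using cC unfolding C_def by auto
qed

lemma posp_split: fixes a b :: real
  shows "(pospart a - pospart b)^2 + (pospart (-a) - pospart (-b))^2 \<le> (a - b)^2"
proof -
  consider "a \<ge> 0" "b \<ge> 0" | "a \<ge> 0" "b < 0" | "a < 0" "b \<ge> 0" | "a < 0" "b < 0" by linarith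
  then show ?thesis
  proof cases
    case 1 then show ?thesis by (simp add: pospart_def)
  next
    case 2
    then have ab: "a * b \<le> 0" by (simp add: mult_nonneg_nonpos)
    have e: "(a - b)^2 = a^2 + b^2 - 2 * (a * b)" by (simp add: power2_eq_square algebra_simps)
    show ?thesis using 2 ab unfolding e by (simp add: pospart_def)
  next
    case 3
    then have ab: "a * b \<le> 0" by (simp add: mult_nonpos_nonneg)
    have e: "(a - b)^2 = a^2 + b^2 - 2 * (a * b)" by (simp add: power2_eq_square algebra_simps)
    show ?thesis using 3 ab unfolding e by (simp add: pospart_def)
  next
    case 4
    have e: "(- a - - b)^2 = (a - b)^2" by (simp add: power2_eq_square algebra_simps)
    show ?thesis using 4 e by (simp add: pospart_def)
  qed
qed

lemma poincare:
  fixes W :: "'b set" and r :: "'b \<Rightarrow> 'b \<Rightarrow> real" and \<phi> :: real and f :: "'b \<Rightarrow> real"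
  assumes fin: "finite W" and \<phi>: "\<phi> > 0" and rnn: "\<And>x y. r x y \<ge> 0" and rle: "\<And>x y. r x y \<le> 1"
    and cut: "\<And>S. S \<subseteq> W \<Longrightarrow> \<phi> * real (card S) * real (card (W - S)) \<le> (\<Sum>x\<in>S. \<Sum>y\<in>W - S. r x y)"
    and mean0: "(\<Sum>x\<in>W. (\<Sum>y\<in>W. r x y) * f x) = 0"
  shows "\<phi>^2 * (\<Sum>x\<in>W. (\<Sum>y\<in>W. r x y) * (f x)^2) \<le> 16 * (\<Sum>x\<in>W. \<Sum>y\<in>W. r x y * (f y - f x)^2)"
proof (cases "W = {}")
  case True then show ?thesis by simp
next
  case False
  define d where "d = (\<lambda>x. \<Sum>y\<in>W. r x y)"
  define m where "m = real (card W)"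
  obtain c where c1: "2 * card {x\<in>W. f x < c} \<le> card W" and c2: "2 * card {x\<in>W. c < f x} \<le> card W"
    using median_exists[OF fin False, of f] by blast
  define h1 where "h1 = (\<lambda>x. pospart (f x - c))"
  define h2 where "h2 = (\<lambda>x. pospart (- (f x - c)))"
  have z1: "real (card W) \<le> 2 * real (card {x\<in>W. h1 x = 0})"
  proof -
    have "{x\<in>W. h1 x = 0} = W - {x\<in>W. c < f x}" unfolding h1_def pospart_def by auto
    then have "card {x\<in>W. h1 x = 0} = card W - card {x\<in>W. c < f x}" using fin by (simp add: card_Diff_subset)
    moreover have "card {x\<in>W. c < f x} \<le> card W" using fin by (intro card_mono) auto
    ultimately show ?thesis using c2 by linarith
  qed
  have z2: "real (card W) \<le> 2 * real (card {x\<in>W. h2 x = 0})"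
  proof -
    have "{x\<in>W. h2 x = 0} = W - {x\<in>W. f x < c}" unfolding h2_def pospart_def by auto
    then have "card {x\<in>W. h2 x = 0} = card W - card {x\<in>W. f x < c}" using fin by (simp add: card_Diff_subset)
    moreover have "card {x\<in>W. f x < c} \<le> card W" using fin by (intro card_mono) auto
    ultimately show ?thesis using c1 by linarith
  qed
  have h1nn: "\<And>x. x \<in> W \<Longrightarrow> h1 x \<ge> 0" unfolding h1_def pospart_def by simp
  have h2nn: "\<And>x. x \<in> W \<Longrightarrow> h2 x \<ge> 0" unfolding h2_def pospart_def by simp
  have S1: "\<phi>^2 * m * (\<Sum>x\<in>W. (h1 x)^2) \<le> 16 * (\<Sum>x\<in>W. \<Sum>y\<in>W. r x y * (h1 y - h1 x)^2)"
    unfolding m_def by (rule sq_lemma[OF fin \<phi> rnn rle cut h1nn z1])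
  have S2: "\<phi>^2 * m * (\<Sum>x\<in>W. (h2 x)^2) \<le> 16 * (\<Sum>x\<in>W. \<Sum>y\<in>W. r x y * (h2 y - h2 x)^2)"
    unfolding m_def by (rule sq_lemma[OF fin \<phi> rnn rle cut h2nn z2])
  have hsum: "\<And>x. (h1 x)^2 + (h2 x)^2 = (f x - c)^2"
  proof -
    fix x
    show "(h1 x)^2 + (h2 x)^2 = (f x - c)^2"
    proof (cases "f x \<ge> c")
      case True
      then show ?thesis unfolding h1_def h2_def pospart_def by simp
    next
      case False
      then have "(- (f x - c))^2 = (f x - c)^2" by (simp add: power2_eq_square algebra_simps)
      then show ?thesis using False unfolding h1_def h2_def pospart_def by simp
    qed
  qed
  have split: "(\<Sum>x\<in>W. \<Sum>y\<in>W. r x y * (h1 y - h1 x)^2) + (\<Sum>x\<in>W. \<Sum>y\<in>W. r x y * (h2 y - h2 x)^2) \<le> (\<Sum>x\<in>W. \<Sum>y\<in>W. r x y * (f y - f x)^2)"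
  proof -
    have "\<And>x y. r x y * (h1 y - h1 x)^2 + r x y * (h2 y - h2 x)^2 \<le> r x y * (f y - f x)^2"
    proof -
      fix x y
      have "(h1 y - h1 x)^2 + (h2 y - h2 x)^2 \<le> ((f y - c) - (f x - c))^2"
        unfolding h1_def h2_def by (rule posp_split)
      then have "r x y * ((h1 y - h1 x)^2 + (h2 y - h2 x)^2) \<le> r x y * (f y - f x)^2"
        using rnn by (intro mult_left_mono) auto
      then show "r x y * (h1 y - h1 x)^2 + r x y * (h2 y - h2 x)^2 \<le> r x y * (f y - f x)^2"
        by (simp add: distrib_left)
    qed
    then have "(\<Sum>x\<in>W. \<Sum>y\<in>W. r x y * (h1 y - h1 x)^2 + r x y * (h2 y - h2 x)^2) \<le> (\<Sum>x\<in>W. \<Sum>y\<in>W. r x y * (f y - f x)^2)"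
      by (intro sum_mono) auto
    then show ?thesis by (simp add: sum.distrib)
  qed
  have dnn: "\<And>x. d x \<ge> 0" unfolding d_def using rnn by (simp add: sum_nonneg)
  have dle: "\<And>x. d x \<le> m"
  proof -
    fix x
    have "(\<Sum>y\<in>W. r x y) \<le> (\<Sum>y\<in>W. (1::real))" by (rule sum_mono) (rule rle)
    then show "d x \<le> m" unfolding d_def m_def by simp
  qed
  have "(\<Sum>x\<in>W. d x * (f x)^2) \<le> (\<Sum>x\<in>W. d x * (f x - c)^2)"
  proof -
    have "(\<Sum>x\<in>W. d x * (f x - c)^2) = (\<Sum>x\<in>W. d x * (f x)^2) - 2 * c * (\<Sum>x\<in>W. d x * f x) + c^2 * (\<Sum>x\<in>W. d x)"
      by (simp add: power2_eq_square algebra_simps sum.distrib sum_subtractf sum_distrib_left)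
    also have "(\<Sum>x\<in>W. d x * f x) = 0" using mean0 unfolding d_def .
    finally show ?thesis using dnn by (simp add: sum_nonneg)
  qed
  also have "\<dots> \<le> (\<Sum>x\<in>W. m * (f x - c)^2)"
    using dle by (intro sum_mono mult_right_mono) auto
  also have "\<dots> = m * ((\<Sum>x\<in>W. (h1 x)^2) + (\<Sum>x\<in>W. (h2 x)^2))"
    by (simp add: hsum sum.distrib[symmetric] sum_distrib_left)
  finally have main: "(\<Sum>x\<in>W. d x * (f x)^2) \<le> m * ((\<Sum>x\<in>W. (h1 x)^2) + (\<Sum>x\<in>W. (h2 x)^2))" .
  have "\<phi>^2 * (\<Sum>x\<in>W. d x * (f x)^2) \<le> \<phi>^2 * (m * ((\<Sum>x\<in>W. (h1 x)^2) + (\<Sum>x\<in>W. (h2 x)^2)))"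
    using main by (intro mult_left_mono) auto
  also have "\<dots> = \<phi>^2 * m * (\<Sum>x\<in>W. (h1 x)^2) + \<phi>^2 * m * (\<Sum>x\<in>W. (h2 x)^2)" by (simp add: algebra_simps)
  also have "\<dots> \<le> 16 * (\<Sum>x\<in>W. \<Sum>y\<in>W. r x y * (f y - f x)^2)" using S1 S2 split by linarith
  finally show ?thesis unfolding d_def .
qed




context
  fixes m :: nat and R :: "nat \<Rightarrow> nat \<Rightarrow> bool"
begin

definition rr :: "nat \<Rightarrow> nat \<Rightarrow> real" where "rr i j = (if R i j then 1 else 0)"
definition dd :: "nat \<Rightarrow> real" where "dd i = (\<Sum>j<m. rr i j)"
definition Pf :: "(nat \<Rightarrow> real) \<Rightarrow> nat \<Rightarrow> real" where "Pf f i = (\<Sum>j<m. rr i j * f j) / dd i"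
definition Bd :: "(nat \<Rightarrow> real) \<Rightarrow> (nat \<Rightarrow> real) \<Rightarrow> real" where "Bd f g = (\<Sum>i<m. dd i * f i * g i)"
definition Ld :: "(nat \<Rightarrow> real) \<Rightarrow> real" where "Ld f = (\<Sum>i<m. dd i * f i)"
definition Qf :: "(nat \<Rightarrow> real) \<Rightarrow> real" where "Qf f = (\<Sum>i<m. \<Sum>j<m. rr i j * (f j - f i)^2)"

lemma Pf_cong: "(\<And>j. j < m \<Longrightarrow> f j = g j) \<Longrightarrow> Pf f i = Pf g i"
  unfolding Pf_def by (intro arg_cong2[where f="(/)"] sum.cong refl) auto

context
  assumes Rsym: "\<And>i j. R i j \<Longrightarrow> R j i"
begin

lemma rr_sym: "rr i j = rr j i" unfolding rr_def using Rsym by auto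

context
  assumes dpos: "\<And>i. i < m \<Longrightarrow> dd i > 0"
begin

lemma Bd_Pf: "Bd (Pf f) g = (\<Sum>i<m. \<Sum>j<m. rr i j * f j * g i)"
  unfolding Bd_def Pf_def
proof (intro sum.cong refl)
  fix i assume "i \<in> {..<m}"
  then have "dd i > 0" using dpos by auto
  then show "dd i * ((\<Sum>j<m. rr i j * f j) / dd i) * g i = (\<Sum>j<m. rr i j * f j * g i)"
    by (simp add: sum_distrib_right)
qed

lemma Bd_Pf_sym: "Bd (Pf f) g = Bd f (Pf g)"
proof -
  have "Bd (Pf f) g = (\<Sum>i<m. \<Sum>j<m. rr i j * f j * g i)" by (rule Bd_Pf)
  also have "\<dots> = (\<Sum>j<m. \<Sum>i<m. rr i j * f j * g i)" by (rule sum.swap)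
  also have "\<dots> = (\<Sum>j<m. \<Sum>i<m. rr j i * g i * f j)" by (simp add: rr_sym mult_ac)
  also have "\<dots> = Bd (Pf g) f" by (simp add: Bd_Pf)
  also have "\<dots> = Bd f (Pf g)" unfolding Bd_def by (simp add: mult_ac)
  finally show ?thesis .
qed

lemma Bd_comm: "Bd f g = Bd g f" unfolding Bd_def by (simp add: mult_ac)

lemma Qf_form: "Qf f = 2 * (Bd f f - Bd (Pf f) f)"
proof -
  have "Qf f = (\<Sum>i<m. \<Sum>j<m. rr i j * (f j)^2) + (\<Sum>i<m. \<Sum>j<m. rr i j * (f i)^2) - 2 * (\<Sum>i<m. \<Sum>j<m. rr i j * f j * f i)"
    unfolding Qf_def by (simp add: power2_eq_square algebra_simps sum.distrib sum_subtractf sum_distrib_left)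
  also have "(\<Sum>i<m. \<Sum>j<m. rr i j * (f j)^2) = (\<Sum>j<m. \<Sum>i<m. rr j i * (f j)^2)"
    by (subst sum.swap) (simp add: rr_sym)
  also have "\<dots> = Bd f f" unfolding Bd_def dd_def
    by (intro sum.cong refl) (simp add: sum_distrib_right[symmetric] power2_eq_square mult.assoc)
  also have "(\<Sum>i<m. \<Sum>j<m. rr i j * f j * f i) = Bd (Pf f) f" by (simp add: Bd_Pf)
  finally show ?thesis by simp
qed

lemma Bd_nonneg: "Bd f f \<ge> 0"
  unfolding Bd_def using dpos by (intro sum_nonneg) (simp add: mult.assoc, metis less_imp_le mult_nonneg_nonneg zero_le_square)

lemma Bd_zero: assumes "Bd f f = 0" "i < m" shows "f i = 0"
proof -
  have nn: "\<And>j. j \<in> {..<m} \<Longrightarrow> dd j * f j * f j \<ge> 0" using dpos by (simp add: mult.assoc, metis less_imp_le mult_nonneg_nonneg zero_le_square)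
  have "(\<Sum>j<m. dd j * f j * f j) = 0" using assms(1) unfolding Bd_def .
  then have "\<forall>j\<in>{..<m}. dd j * f j * f j = 0" using sum_nonneg_eq_0_iff[of "{..<m}" "\<lambda>j. dd j * f j * f j"] nn by blast
  then have "dd i * f i * f i = 0" using assms(2) by blast
  then show ?thesis using dpos[OF assms(2)] by simp
qed

context
  fixes K :: real
  assumes Kpos: "K > 0"
    and poinc: "\<And>f. Ld f = 0 \<Longrightarrow> Bd f f \<le> K * Qf f"
begin

lemma rayleigh_core:
  assumes eig: "\<And>i. i < m \<Longrightarrow> Pf f i = lam * f i" and L0: "Ld f = 0" and lam: "lam > 1 - 1 / (2 * K)"
  shows "\<And>i. i < m \<Longrightarrow> f i = 0"
proof -
  have "Bd (Pf f) f = lam * Bd f f" unfolding Bd_def using eig by (simp add: sum_distrib_left mult_ac)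
  then have Q: "Qf f = 2 * (1 - lam) * Bd f f" using Qf_form[of f] by (simp add: algebra_simps)
  have "Bd f f \<le> K * (2 * (1 - lam) * Bd f f)" using poinc[OF L0] Q by simp
  moreover have "2 * K * (1 - lam) < 1"
  proof -
    have "1 - lam < 1 / (2 * K)" using lam by simp
    then have "2 * K * (1 - lam) < 2 * K * (1 / (2 * K))" using Kpos by (intro mult_strict_left_mono) auto
    then show ?thesis using Kpos by simp
  qed
  ultimately have A: "Bd f f \<le> (2 * K * (1 - lam)) * Bd f f" and t1: "2 * K * (1 - lam) < 1"
    by (simp_all add: mult_ac)
  then have "(1 - 2 * K * (1 - lam)) * Bd f f \<le> 0" by (simp add: algebra_simps)
  then have "Bd f f \<le> 0" using t1 by (simp add: mult_le_0_iff)
  then have "Bd f f = 0" using Bd_nonneg[of f] by simp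
  then show "\<And>i. i < m \<Longrightarrow> f i = 0" using Bd_zero by auto
qed

end

lemma Bd_cong: "(\<And>i. i < m \<Longrightarrow> f i = f' i) \<Longrightarrow> (\<And>i. i < m \<Longrightarrow> g i = g' i) \<Longrightarrow> Bd f g = Bd f' g'"
  unfolding Bd_def by (intro sum.cong refl) auto

lemma Ld_cong: "(\<And>i. i < m \<Longrightarrow> f i = f' i) \<Longrightarrow> Ld f = Ld f'"
  unfolding Ld_def by (intro sum.cong refl) auto

lemma Bd_lin1: "Bd (\<lambda>i. a * f i + b * g i) h = a * Bd f h + b * Bd g h"
  unfolding Bd_def by (simp add: algebra_simps sum.distrib sum_distrib_left)

lemma Bd_lin2: "Bd h (\<lambda>i. a * f i + b * g i) = a * Bd h f + b * Bd h g"
  unfolding Bd_def by (simp add: algebra_simps sum.distrib sum_distrib_left)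

lemma Ld_lin: "Ld (\<lambda>i. a * f i + b * g i) = a * Ld f + b * Ld g"
  unfolding Ld_def by (simp add: algebra_simps sum.distrib sum_distrib_left)

lemma Pf_lin: "Pf (\<lambda>i. a * f i + b * g i) i = a * Pf f i + b * Pf g i"
  unfolding Pf_def by (simp add: algebra_simps sum.distrib sum_distrib_left add_divide_distrib)

lemma gen_eig:
  assumes "\<And>i. i < m \<Longrightarrow> Pf (\<lambda>j. Pf v j - lam * v j) i = lam * (Pf v i - lam * v i)"
  shows "\<And>i. i < m \<Longrightarrow> Pf v i - lam * v i = 0"
proof -
  define w where "w = (\<lambda>j. Pf v j - lam * v j)"
  have w: "w = (\<lambda>j. 1 * Pf v j + (- lam) * v j)" unfolding w_def by simp
  have "Bd w w = Bd (\<lambda>j. 1 * Pf v j + (- lam) * v j) w" using w by simp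
  also have "\<dots> = Bd (Pf v) w - lam * Bd v w" unfolding Bd_lin1 by simp
  also have "Bd (Pf v) w = Bd v (Pf w)" by (rule Bd_Pf_sym)
  also have "Bd v (Pf w) = Bd v (\<lambda>i. lam * w i + 0 * w i)"
    using assms unfolding w_def by (intro Bd_cong) auto
  also have "\<dots> = lam * Bd v w" unfolding Bd_lin2 by simp
  finally have "Bd w w = 0" by simp
  then show "\<And>i. i < m \<Longrightarrow> Pf v i - lam * v i = 0" using Bd_zero unfolding w_def by blast
qed

context
  fixes K :: real
  assumes Kpos: "K > 0"
    and poinc: "\<And>f. Ld f = 0 \<Longrightarrow> Bd f f \<le> K * Qf f"
begin

lemma eig_dep:
  assumes eu: "\<And>i. i < m \<Longrightarrow> Pf u i = lam * u i" and ev: "\<And>i. i < m \<Longrightarrow> Pf v i = lam * v i"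
    and lam: "lam > 1 - 1 / (2 * K)" and nz: "i0 < m" "u i0 \<noteq> 0"
  shows "Ld u \<noteq> 0" "\<And>i. i < m \<Longrightarrow> v i = (Ld v / Ld u) * u i"
proof -
  show Lu: "Ld u \<noteq> 0"
  proof
    assume "Ld u = 0"
    then have "u i0 = 0" using rayleigh_core[OF Kpos poinc eu _ lam] nz(1) by blast
    then show False using nz(2) by simp
  qed
  define g where "g = (\<lambda>i. Ld v * u i + (- Ld u) * v i)"
  have Lg: "Ld g = 0" unfolding g_def Ld_lin by simp
  have eg: "\<And>i. i < m \<Longrightarrow> Pf g i = lam * g i" unfolding g_def Pf_lin using eu ev by (simp add: algebra_simps)
  have "\<And>i. i < m \<Longrightarrow> g i = 0" using rayleigh_core[OF Kpos poinc eg Lg lam] by blast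
  then show "\<And>i. i < m \<Longrightarrow> v i = (Ld v / Ld u) * u i" unfolding g_def using Lu by (simp add: field_simps)
qed

lemma two_eig:
  assumes eu: "\<And>i. i < m \<Longrightarrow> Pf u i = l1 * u i" and ev: "\<And>i. i < m \<Longrightarrow> Pf v i = l2 * v i"
    and ne: "l1 \<noteq> l2" and l1: "l1 > 1 - 1 / (2 * K)" and l2: "l2 > 1 - 1 / (2 * K)"
  shows "(\<forall>i<m. u i = 0) \<or> (\<forall>i<m. v i = 0)"
proof -
  have "l1 * Bd u v = Bd (Pf u) v"
  proof -
    have "Bd (Pf u) v = Bd (\<lambda>i. l1 * u i + 0 * u i) v" using eu by (intro Bd_cong) auto
    then show ?thesis unfolding Bd_lin1 by simp
  qed
  also have "\<dots> = Bd u (Pf v)" by (rule Bd_Pf_sym)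
  also have "\<dots> = l2 * Bd u v"
  proof -
    have "Bd u (Pf v) = Bd u (\<lambda>i. l2 * v i + 0 * v i)" using ev by (intro Bd_cong) auto
    then show ?thesis unfolding Bd_lin2 by simp
  qed
  finally have orth: "Bd u v = 0" using ne by simp
  have orth': "Bd v u = 0" using orth Bd_comm by simp
  define a where "a = Ld v"
  define b where "b = - Ld u"
  define g where "g = (\<lambda>i. a * u i + b * v i)"
  have Lg: "Ld g = 0" unfolding g_def Ld_lin a_def b_def by simp
  define Nu where "Nu = Bd u u"
  define Nv where "Nv = Bd v v"
  have Nu0: "Nu \<ge> 0" unfolding Nu_def by (rule Bd_nonneg)
  have Nv0: "Nv \<ge> 0" unfolding Nv_def by (rule Bd_nonneg)
  have Bgg: "Bd g g = a^2 * Nu + b^2 * Nv"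
    unfolding g_def Bd_lin1 Bd_lin2 Nu_def Nv_def using orth orth' by (simp add: power2_eq_square)
  have Pg: "Bd (Pf g) g = a^2 * l1 * Nu + b^2 * l2 * Nv"
  proof -
    have "Bd (Pf g) g = Bd (\<lambda>i. (a * l1) * u i + (b * l2) * v i) g"
      unfolding g_def Pf_lin using eu ev by (intro Bd_cong) (auto simp: mult_ac)
    also have "\<dots> = a^2 * l1 * Nu + b^2 * l2 * Nv"
      unfolding g_def Bd_lin1 Bd_lin2 Nu_def Nv_def using orth orth' by (simp add: power2_eq_square mult_ac)
    finally show ?thesis .
  qed
  have "a^2 * Nu + b^2 * Nv \<le> K * (2 * (a^2 * Nu + b^2 * Nv - (a^2 * l1 * Nu + b^2 * l2 * Nv)))"
    using poinc[OF Lg] Qf_form[of g] Bgg Pg by simp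
  then have main: "(1 - 2 * K * (1 - l1)) * (a^2 * Nu) + (1 - 2 * K * (1 - l2)) * (b^2 * Nv) \<le> 0"
    by (simp add: algebra_simps)
  have t1: "1 - 2 * K * (1 - l1) > 0"
  proof -
    have "1 - l1 < 1 / (2 * K)" using l1 by simp
    then have "2 * K * (1 - l1) < 2 * K * (1 / (2 * K))" using Kpos by (intro mult_strict_left_mono) auto
    then show ?thesis using Kpos by simp
  qed
  have t2: "1 - 2 * K * (1 - l2) > 0"
  proof -
    have "1 - l2 < 1 / (2 * K)" using l2 by simp
    then have "2 * K * (1 - l2) < 2 * K * (1 / (2 * K))" using Kpos by (intro mult_strict_left_mono) auto
    then show ?thesis using Kpos by simp
  qed
  have x1: "a^2 * Nu \<ge> 0" using Nu0 by simp
  have x2: "b^2 * Nv \<ge> 0" using Nv0 by simp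
  have y1: "(1 - 2 * K * (1 - l1)) * (a^2 * Nu) \<ge> 0" using t1 x1 by simp
  have y2: "(1 - 2 * K * (1 - l2)) * (b^2 * Nv) \<ge> 0" using t2 x2 by simp
  have "(1 - 2 * K * (1 - l1)) * (a^2 * Nu) = 0" using main y1 y2 by linarith
  then have z1: "a = 0 \<or> Nu = 0" using t1 by simp
  have "(1 - 2 * K * (1 - l2)) * (b^2 * Nv) = 0" using main y1 y2 by linarith
  then have z2: "b = 0 \<or> Nv = 0" using t2 by simp
  show ?thesis
  proof (cases "Nu = 0")
    case True then show ?thesis using Bd_zero unfolding Nu_def by blast
  next
    case False
    then have "a = 0" using z1 by simp
    show ?thesis
    proof (cases "Nv = 0")
      case True then show ?thesis using Bd_zero unfolding Nv_def by blast
    next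
      case False
      then have "b = 0" using z2 by simp
      then have "Ld u = 0" unfolding b_def by simp
      then show ?thesis using rayleigh_core[OF Kpos poinc eu _ l1] by blast
    qed
  qed
qed

end

end
end
end



definition WM :: "nat \<Rightarrow> (nat \<Rightarrow> nat \<Rightarrow> bool) \<Rightarrow> real mat" where
  "WM m R = mat m m (\<lambda>(i,j). if R i j then 1 / dd m R i else 0)"

lemma WM_carrier: "WM m R \<in> carrier_mat m m" unfolding WM_def by simp

lemma WM_mult: assumes v: "v \<in> carrier_vec m" and i: "i < m"
  shows "(WM m R *\<^sub>v v) $ i = Pf m R (\<lambda>j. v $ j) i"
proof -
  have "(WM m R *\<^sub>v v) $ i = (\<Sum>j\<in>{0..<m}. (if R i j then 1 / dd m R i else 0) * v $ j)"
    using v i unfolding WM_def by (simp add: scalar_prod_def)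
  also have "\<dots> = (\<Sum>j<m. rr R i j * v $ j / dd m R i)"
    by (intro sum.cong) (auto simp: rr_def)
  also have "\<dots> = Pf m R (\<lambda>j. v $ j) i" unfolding Pf_def by (simp add: sum_divide_distrib)
  finally show ?thesis .
qed

lemma char_mult: assumes v: "v \<in> carrier_vec m" and i: "i < m"
  shows "(char_matrix (WM m R) lam *\<^sub>v v) $ i = Pf m R (\<lambda>j. v $ j) i - lam * v $ i"
proof -
  have "(char_matrix (WM m R) lam *\<^sub>v v) $ i = (\<Sum>j\<in>{0..<m}. (WM m R $$ (i,j) - lam * (if j = i then 1 else 0)) * v $ j)"
    using v i WM_carrier[of m R] unfolding char_matrix_def by (simp add: scalar_prod_def)
  also have "\<dots> = (\<Sum>j\<in>{0..<m}. WM m R $$ (i,j) * v $ j + (if i = j then (-lam) * v $ j else 0))"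
    by (intro sum.cong refl) (auto simp: algebra_simps)
  also have "\<dots> = (\<Sum>j\<in>{0..<m}. WM m R $$ (i,j) * v $ j) + (\<Sum>j\<in>{0..<m}. (if i = j then (-lam) * v $ j else 0))"
    by (rule sum.distrib)
  also have "(\<Sum>j\<in>{0..<m}. (if i = j then (-lam) * v $ j else 0)) = - lam * v $ i"
    using i by (simp add: sum.delta)
  also have "(\<Sum>j\<in>{0..<m}. WM m R $$ (i,j) * v $ j) = (WM m R *\<^sub>v v) $ i"
    using v i WM_carrier[of m R] by (simp add: scalar_prod_def)
  finally show ?thesis using WM_mult[OF v i] by simp
qed

lemma complex_eig_real:
  fixes v :: "complex vec" and a :: complex
  assumes Rsym: "\<And>i j. R i j \<Longrightarrow> R j i" and dpos: "\<And>i. i < m \<Longrightarrow> dd m R i > 0"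
    and ev: "eigenvector (map_mat complex_of_real (WM m R)) v a"
  shows "a \<in> \<real>"
proof -
  define C where "C = map_mat complex_of_real (WM m R)"
  have v: "v \<in> carrier_vec m" and vnz: "v \<noteq> 0\<^sub>v m" and eq: "C *\<^sub>v v = a \<cdot>\<^sub>v v"
    using ev unfolding eigenvector_def C_def WM_def by auto
  have Cv: "\<And>i. i < m \<Longrightarrow> (C *\<^sub>v v) $ i = (\<Sum>j<m. of_real (rr R i j) * v $ j) / of_real (dd m R i)"
  proof -
    fix i assume i: "i < m"
    have "(C *\<^sub>v v) $ i = (\<Sum>j\<in>{0..<m}. of_real (if R i j then 1 / dd m R i else 0) * v $ j)"
      using v i unfolding C_def WM_def by (simp add: scalar_prod_def)
    also have "\<dots> = (\<Sum>j<m. of_real (rr R i j) * v $ j / of_real (dd m R i))"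
      by (intro sum.cong) (auto simp: rr_def)
    finally show "(C *\<^sub>v v) $ i = (\<Sum>j<m. of_real (rr R i j) * v $ j) / of_real (dd m R i)"
      by (simp add: sum_divide_distrib)
  qed
  define H where "H = (\<Sum>i<m. \<Sum>j<m. of_real (rr R i j) * cnj (v $ i) * v $ j)"
  define N where "N = (\<Sum>i<m. dd m R i * (cmod (v $ i))^2)"
  have H1: "H = a * of_real N"
  proof -
    have "H = (\<Sum>i<m. of_real (dd m R i) * cnj (v $ i) * (C *\<^sub>v v) $ i)"
      unfolding H_def
    proof (intro sum.cong refl)
      fix i assume "i \<in> {..<m}"
      then have i: "i < m" by simp
      have "of_real (dd m R i) \<noteq> (0::complex)" using dpos[OF i] by simp
      then have "of_real (dd m R i) * cnj (v $ i) * ((\<Sum>j<m. of_real (rr R i j) * v $ j) / of_real (dd m R i)) = cnj (v $ i) * (\<Sum>j<m. of_real (rr R i j) * v $ j)"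
        by simp
      also have "\<dots> = (\<Sum>j<m. of_real (rr R i j) * cnj (v $ i) * v $ j)"
        by (simp add: sum_distrib_left mult_ac)
      finally show "(\<Sum>j<m. of_real (rr R i j) * cnj (v $ i) * v $ j) = of_real (dd m R i) * cnj (v $ i) * (C *\<^sub>v v) $ i"
        unfolding Cv[OF i] by simp
    qed
    also have "\<dots> = (\<Sum>i<m. a * (of_real (dd m R i * (cmod (v $ i))^2)))"
    proof (intro sum.cong refl)
      fix i assume "i \<in> {..<m}"
      then have i: "i < m" by simp
      have "(C *\<^sub>v v) $ i = a * v $ i" using eq v i by simp
      moreover have "cnj (v $ i) * v $ i = of_real ((cmod (v $ i))^2)"
        using complex_norm_square[of "v $ i"] by (simp add: mult.commute)
      ultimately show "of_real (dd m R i) * cnj (v $ i) * (C *\<^sub>v v) $ i = a * (of_real (dd m R i * (cmod (v $ i))^2))"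
        by (simp add: mult_ac)
    qed
    also have "\<dots> = a * of_real N" unfolding N_def by (simp add: sum_distrib_left)
    finally show ?thesis .
  qed
  have H2: "cnj H = H"
  proof -
    have "cnj H = (\<Sum>i<m. \<Sum>j<m. of_real (rr R i j) * v $ i * cnj (v $ j))"
      unfolding H_def by (simp add: mult_ac)
    also have "\<dots> = (\<Sum>j<m. \<Sum>i<m. of_real (rr R i j) * v $ i * cnj (v $ j))" by (rule sum.swap)
    also have "\<dots> = H" unfolding H_def using rr_sym[OF Rsym] by (simp add: mult_ac)
    finally show ?thesis .
  qed
  have Npos: "N > 0"
  proof -
    obtain i where i: "i < m" "v $ i \<noteq> 0" using vnz v by (metis dim_vec carrier_vecD eq_vecI index_zero_vec(1) index_zero_vec(2))
    have nn: "\<And>j. j \<in> {..<m} \<Longrightarrow> dd m R j * (cmod (v $ j))^2 \<ge> 0" using dpos by (simp add: less_imp_le)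
    have "0 < dd m R i * (cmod (v $ i))^2" using dpos[OF i(1)] i(2) by simp
    also have "\<dots> \<le> N" unfolding N_def using i(1) nn by (intro member_le_sum) auto
    finally show ?thesis .
  qed
  have "Im H = 0" using H2 by (metis cnj.simps(2) neg_equal_zero complex.expand cnj.simps(1))
  then have "Im a * N = 0" using H1 by simp
  then have "Im a = 0" using Npos by simp
  then show ?thesis by (simp add: complex_is_Real_iff)
qed

interpretation ofr_poly: map_poly_inj_comm_ring_hom "of_real :: real \<Rightarrow> complex" ..

lemma char_poly_split:
  assumes Rsym: "\<And>i j. R i j \<Longrightarrow> R j i" and dpos: "\<And>i. i < m \<Longrightarrow> dd m R i > 0"
  shows "\<exists>rs. char_poly (WM m R) = (\<Prod>r\<leftarrow>rs. [:- r, 1:]) \<and> length rs = m"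
proof -
  define A where "A = WM m R"
  have A: "A \<in> carrier_mat m m" unfolding A_def by (rule WM_carrier)
  define C where "C = map_mat complex_of_real A"
  have C: "C \<in> carrier_mat m m" unfolding C_def using A by simp
  have cpC: "char_poly C = map_poly of_real (char_poly A)"
    unfolding C_def using of_real_hom.char_poly_hom[OF A] by simp
  obtain as where as: "char_poly C = (\<Prod>a\<leftarrow>as. [:- a, 1:])" and las: "length as = m"
    using char_poly_factorized[OF C] by blast
  have real: "\<And>a. a \<in> set as \<Longrightarrow> a \<in> \<real>"
  proof -
    fix a assume a: "a \<in> set as"
    have "poly (char_poly C) a = 0" unfolding as using a
      by (simp add: poly_prod_list prod_list_zero_iff)
    then have "eigenvalue C a" using eigenvalue_root_char_poly[OF C] by simp
    then obtain v where "eigenvector C v a" unfolding eigenvalue_def by blast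
    then show "a \<in> \<real>" using complex_eig_real[OF Rsym dpos] unfolding C_def A_def by blast
  qed
  define rs where "rs = map Re as"
  have asrs: "as = map of_real rs" unfolding rs_def using real
    by (induct as) (auto simp: complex_is_Real_iff complex_eq_iff)
  have mp: "map_poly of_real (\<Prod>r\<leftarrow>rs. [:- r, 1:]) = (\<Prod>r\<leftarrow>rs. [:- (of_real r :: complex), 1:])"
  proof (induct rs)
    case Nil then show ?case by simp
  next
    case (Cons a rs)
    have "map_poly complex_of_real (\<Prod>r\<leftarrow>a # rs. [:- r, 1:]) = map_poly complex_of_real [:- a, 1:] * map_poly complex_of_real (\<Prod>r\<leftarrow>rs. [:- r, 1:])"
      by (simp only: list.map prod_list.Cons ofr_poly.hom_mult)
    also have "map_poly complex_of_real [:- a, 1:] = [:- (of_real a :: complex), 1:]" by simp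
    finally show ?case using Cons by simp
  qed
  have "map_poly complex_of_real (char_poly A) = char_poly C" using cpC by simp
  also have "\<dots> = (\<Prod>a\<leftarrow>as. [:- a, 1:])" by (rule as)
  also have "\<dots> = (\<Prod>r\<leftarrow>rs. [:- (of_real r :: complex), 1:])" unfolding asrs by (simp add: o_def)
  also have "\<dots> = map_poly complex_of_real (\<Prod>r\<leftarrow>rs. [:- r, 1:])" using mp by simp
  finally have "char_poly A = (\<Prod>r\<leftarrow>rs. [:- r, 1:])" using ofr_poly.eq_iff by blast
  moreover have "length rs = m" unfolding rs_def using las by simp
  ultimately show ?thesis unfolding A_def by blast
qed

lemma kernel_dim_le1:
  fixes B :: "'a :: field mat"
  assumes B: "B \<in> carrier_mat m m" and u: "u \<in> mat_kernel B"
    and all: "\<And>v. v \<in> mat_kernel B \<Longrightarrow> \<exists>c. v = c \<cdot>\<^sub>v u"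
  shows "kernel_dim B \<le> 1"
proof -
  interpret K: kernel m m B by unfold_locales (rule B)
  have sub: "{u} \<subseteq> mat_kernel B" using u by auto
  have "K.Ker.span {u} = mat_kernel B"
  proof
    show "K.Ker.span {u} \<subseteq> mat_kernel B" using K.Ker.span_is_subset2[OF sub] by simp
    show "mat_kernel B \<subseteq> K.Ker.span {u}"
    proof
      fix v assume v: "v \<in> mat_kernel B"
      obtain c where c: "v = c \<cdot>\<^sub>v u" using all[OF v] by blast
      have us: "u \<in> K.Ker.span {u}" using K.Ker.in_own_span[OF sub] by auto
      interpret S: submodule class_ring "K.Ker.span {u}" K.VK by (rule K.Ker.span_is_submodule[OF sub])
      have "c \<cdot>\<^sub>v u \<in> K.Ker.span {u}" using S.smult_closed[of c u] us by simp
      then show "v \<in> K.Ker.span {u}" using c by simp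
    qed
  qed
  then have "K.Ker.gen_set {u}" by simp
  then have "K.dim \<le> 1" using K.Ker.dim_le1I u by simp
  then show ?thesis using K.kernel_dim by simp
qed

lemma sum_list_min: "min k (sum_list (xs :: nat list)) \<le> sum_list (map (min k) xs)"
  by (induct xs) auto

lemma order_le1:
  assumes Rsym: "\<And>i j. R i j \<Longrightarrow> R j i" and dpos: "\<And>i. i < m \<Longrightarrow> dd m R i > 0"
    and Kpos: "K > 0" and poinc: "\<And>f. Ld m R f = 0 \<Longrightarrow> Bd m R f f \<le> K * Qf m R f"
    and lam: "lam > 1 - 1 / (2 * K)"
  shows "Polynomial.order lam (char_poly (WM m R)) \<le> 1"
proof (rule ccontr)
  assume "\<not> Polynomial.order lam (char_poly (WM m R)) \<le> 1"
  then have o2: "Polynomial.order lam (char_poly (WM m R)) \<ge> 2" by simp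
  define A where "A = WM m R"
  have A: "A \<in> carrier_mat m m" unfolding A_def by (rule WM_carrier)
  obtain rs where rs: "char_poly A = (\<Prod>r\<leftarrow>rs. [:- r, 1:])" using char_poly_split[OF Rsym dpos] unfolding A_def by blast
  obtain n_as where jnf: "jordan_nf A n_as" using jordan_nf_exists[OF A rs] by blast
  have fe: "filter (\<lambda>(n, e). e = lam) n_as = filter (\<lambda>na. snd na = lam) n_as"
    by (rule filter_cong) auto
  have "2 \<le> min 2 (Polynomial.order lam (char_poly A))" using o2 unfolding A_def by simp
  also have "\<dots> = min 2 (sum_list (map fst (filter (\<lambda>na. snd na = lam) n_as)))"
    using jordan_nf_order[OF jnf] by simp
  also have "\<dots> \<le> sum_list (map (min 2) (map fst (filter (\<lambda>na. snd na = lam) n_as)))"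
    by (rule sum_list_min)
  also have "\<dots> = dim_gen_eigenspace A lam 2" using dim_gen_eigenspace[OF jnf, of lam 2] fe by simp
  also have "\<dots> = kernel_dim (char_matrix A lam ^\<^sub>m 2)" unfolding dim_gen_eigenspace_def ..
  finally have d2: "2 \<le> kernel_dim (char_matrix A lam ^\<^sub>m 2)" .
  define Kc where "Kc = char_matrix A lam"
  have Kc: "Kc \<in> carrier_mat m m" unfolding Kc_def using A by simp
  have K2: "char_matrix A lam ^\<^sub>m 2 = Kc * Kc" unfolding Kc_def using A
    by (simp add: numeral_2_eq_2)
  have K2c: "Kc * Kc \<in> carrier_mat m m" using Kc by simp
  have eigk: "\<And>v. v \<in> mat_kernel (Kc * Kc) \<Longrightarrow> (\<forall>i<m. Pf m R (\<lambda>j. v $ j) i = lam * v $ i)"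
  proof -
    fix v assume vk: "v \<in> mat_kernel (Kc * Kc)"
    have v: "v \<in> carrier_vec m" using mat_kernelD(1)[OF K2c vk] .
    have "(Kc * Kc) *\<^sub>v v = 0\<^sub>v m" using mat_kernelD(2)[OF K2c vk] .
    then have z: "Kc *\<^sub>v (Kc *\<^sub>v v) = 0\<^sub>v m" using Kc v by (simp add: assoc_mult_mat_vec)
    define w where "w = Kc *\<^sub>v v"
    have w: "w \<in> carrier_vec m" unfolding w_def using Kc v by simp
    have wi: "\<And>i. i < m \<Longrightarrow> w $ i = Pf m R (\<lambda>j. v $ j) i - lam * v $ i"
      unfolding w_def Kc_def A_def using char_mult[OF v] by simp
    have "\<And>i. i < m \<Longrightarrow> Pf m R (\<lambda>j. Pf m R (\<lambda>j. v $ j) j - lam * v $ j) i = lam * (Pf m R (\<lambda>j. v $ j) i - lam * v $ i)"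
    proof -
      fix i assume i: "i < m"
      have "(Kc *\<^sub>v w) $ i = 0" using z i unfolding w_def by simp
      then have "Pf m R (\<lambda>j. w $ j) i - lam * w $ i = 0" unfolding Kc_def A_def using char_mult[OF w i] by simp
      moreover have "Pf m R (\<lambda>j. w $ j) i = Pf m R (\<lambda>j. Pf m R (\<lambda>j. v $ j) j - lam * v $ j) i"
        by (rule Pf_cong) (simp add: wi)
      ultimately show "Pf m R (\<lambda>j. Pf m R (\<lambda>j. v $ j) j - lam * v $ j) i = lam * (Pf m R (\<lambda>j. v $ j) i - lam * v $ i)"
        using wi[OF i] by simp
    qed
    from gen_eig[OF Rsym dpos this] show "\<forall>i<m. Pf m R (\<lambda>j. v $ j) i = lam * v $ i" by simp
  qed
  have "kernel_dim (Kc * Kc) \<le> 1"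
  proof (cases "\<exists>u\<in>mat_kernel (Kc * Kc). \<exists>i<m. u $ i \<noteq> 0")
    case True
    then obtain u i0 where uk: "u \<in> mat_kernel (Kc * Kc)" and i0: "i0 < m" "u $ i0 \<noteq> 0" by blast
    have u: "u \<in> carrier_vec m" using mat_kernelD(1)[OF K2c uk] .
    show ?thesis
    proof (rule kernel_dim_le1[OF K2c uk])
      fix v assume vk: "v \<in> mat_kernel (Kc * Kc)"
      have v: "v \<in> carrier_vec m" using mat_kernelD(1)[OF K2c vk] .
      have "\<And>i. i < m \<Longrightarrow> v $ i = (Ld m R (\<lambda>j. v $ j) / Ld m R (\<lambda>j. u $ j)) * u $ i"
        using eig_dep(2)[OF Rsym dpos Kpos poinc, of "\<lambda>j. u $ j" lam "\<lambda>j. v $ j"] eigk[OF uk] eigk[OF vk] lam i0 by auto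
      then have "v = (Ld m R (\<lambda>j. v $ j) / Ld m R (\<lambda>j. u $ j)) \<cdot>\<^sub>v u"
        using u v by (intro eq_vecI) auto
      then show "\<exists>c. v = c \<cdot>\<^sub>v u" by blast
    qed
  next
    case False
    have "(Kc * Kc) *\<^sub>v 0\<^sub>v m = 0\<^sub>v m" using K2c by (intro eq_vecI) (auto simp: scalar_prod_def)
    then have zk: "0\<^sub>v m \<in> mat_kernel (Kc * Kc)" using K2c by (intro mat_kernelI) auto
    show ?thesis
    proof (rule kernel_dim_le1[OF K2c zk])
      fix v assume vk: "v \<in> mat_kernel (Kc * Kc)"
      have v: "v \<in> carrier_vec m" using mat_kernelD(1)[OF K2c vk] .
      have "v = 0 \<cdot>\<^sub>v 0\<^sub>v m" using False vk v by (intro eq_vecI) auto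
      then show "\<exists>c. v = c \<cdot>\<^sub>v 0\<^sub>v m" by blast
    qed
  qed
  then show False using d2 K2 by simp
qed


lemma proots_linear_prod: "proots (\<Prod>r\<leftarrow>rs. [:- r, 1:]) = mset (rs :: real list)"
proof (induct rs)
  case Nil then show ?case by simp
next
  case (Cons a rs)
  have nz: "(\<Prod>r\<leftarrow>rs. [:- r, 1:]) \<noteq> (0 :: real poly)"
  proof
    assume "(\<Prod>r\<leftarrow>rs. [:- r, 1:]) = (0 :: real poly)"
    then have "(0 :: real poly) \<in> set (map (\<lambda>r. [:- r, 1:]) rs)" by (simp only: prod_list_zero_iff)
    then show False by auto
  qed
  have "proots (\<Prod>r\<leftarrow>a # rs. [:- r, 1:]) = proots ([:- a, 1:] * (\<Prod>r\<leftarrow>rs. [:- r, 1:]))" by simp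
  also have "\<dots> = proots [:- a, 1:] + proots (\<Prod>r\<leftarrow>rs. [:- r, 1:])"
    using nz by (intro proots_mult) auto
  also have "\<dots> = {#a#} + mset rs" using Cons by simp
  finally show ?case by simp
qed

lemma eigvec_fun:
  assumes ev: "eigenvector (WM m R) v x"
  shows "\<forall>i<m. Pf m R (\<lambda>j. v $ j) i = x * v $ i" "\<exists>i<m. v $ i \<noteq> 0"
proof -
  have v: "v \<in> carrier_vec m" and vnz: "v \<noteq> 0\<^sub>v m" and eq: "WM m R *\<^sub>v v = x \<cdot>\<^sub>v v"
    using ev unfolding eigenvector_def WM_def by auto
  show "\<forall>i<m. Pf m R (\<lambda>j. v $ j) i = x * v $ i"
  proof (intro allI impI)
    fix i assume i: "i < m"
    have "(WM m R *\<^sub>v v) $ i = x * v $ i" using eq v i by simp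
    then show "Pf m R (\<lambda>j. v $ j) i = x * v $ i" using WM_mult[OF v i] by simp
  qed
  show "\<exists>i<m. v $ i \<noteq> 0"
  proof (rule ccontr)
    assume "\<not> (\<exists>i<m. v $ i \<noteq> 0)"
    then have "v = 0\<^sub>v m" using v by (intro eq_vecI) auto
    then show False using vnz by simp
  qed
qed

lemma eig_gap:
  assumes Rsym: "\<And>i j. R i j \<Longrightarrow> R j i" and dpos: "\<And>i. i < m \<Longrightarrow> dd m R i > 0"
    and Kpos: "K > 0" and poinc: "\<And>f. Ld m R f = 0 \<Longrightarrow> Bd m R f f \<le> K * Qf m R f"
    and m2: "m \<ge> 2"
  shows "eigenvalues_desc (WM m R) ! 1 \<le> 1 - 1 / (2 * K)"
proof (rule ccontr)
  assume contra: "\<not> eigenvalues_desc (WM m R) ! 1 \<le> 1 - 1 / (2 * K)"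
  define A where "A = WM m R"
  have A: "A \<in> carrier_mat m m" unfolding A_def by (rule WM_carrier)
  obtain rs where rs: "char_poly A = (\<Prod>r\<leftarrow>rs. [:- r, 1:])" and lrs: "length rs = m"
    using char_poly_split[OF Rsym dpos] unfolding A_def by blast
  have cp0: "char_poly A \<noteq> 0" using degree_monic_char_poly[OF A] by auto
  have pr: "proots (char_poly A) = mset rs" unfolding rs by (rule proots_linear_prod)
  define l where "l = eigenvalues_desc A"
  have l: "l = rev (sort rs)" unfolding l_def eigenvalues_desc_def pr by simp
  have ll: "length l = m" unfolding l using lrs by simp
  have ml: "mset l = mset rs" unfolding l by simp
  have l01: "l ! 1 \<le> l ! 0"
  proof -
    have s: "sorted (sort rs)" by simp
    have "l ! 1 = sort rs ! (m - 2)" unfolding l using m2 lrs by (simp add: rev_nth numeral_2_eq_2)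
    moreover have "l ! 0 = sort rs ! (m - 1)" unfolding l using m2 lrs by (simp add: rev_nth)
    moreover have "sort rs ! (m - 2) \<le> sort rs ! (m - 1)" using s m2 lrs
      by (intro sorted_nth_mono) auto
    ultimately show ?thesis by simp
  qed
  define y where "y = l ! 1"
  define x where "x = l ! 0"
  have y: "y > 1 - 1 / (2 * K)" using contra unfolding y_def l_def A_def by simp
  have x: "x > 1 - 1 / (2 * K)" using y l01 unfolding x_def y_def by simp
  have root: "\<And>z. z \<in> set l \<Longrightarrow> eigenvalue A z"
  proof -
    fix z assume "z \<in> set l"
    then have "z \<in># proots (char_poly A)" unfolding pr ml[symmetric] by simp
    then have "poly (char_poly A) z = 0" using cp0 by simp
    then show "eigenvalue A z" using eigenvalue_root_char_poly[OF A] by simp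
  qed
  have xl: "x \<in> set l" unfolding x_def using ll m2 by simp
  have yl: "y \<in> set l" unfolding y_def using ll m2 by simp
  show False
  proof (cases "x = y")
    case True
    obtain a b t where lab: "l = a # b # t" using ll m2
      by (metis One_nat_def Suc_le_length_iff numeral_2_eq_2)
    have "a = y" "b = y" using True unfolding x_def y_def lab by simp_all
    then have "count (mset l) y \<ge> 2" unfolding lab by simp
    then have "count (proots (char_poly A)) y \<ge> 2" unfolding pr ml[symmetric] .
    then have "Polynomial.order y (char_poly A) \<ge> 2" using cp0 by simp
    moreover have "Polynomial.order y (char_poly A) \<le> 1"
      unfolding A_def by (rule order_le1[OF Rsym dpos Kpos poinc y])
    ultimately show False by simp
  next
    case False
    obtain v where ev: "eigenvector A v x" using root[OF xl] unfolding eigenvalue_def by blast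
    obtain w where ew: "eigenvector A w y" using root[OF yl] unfolding eigenvalue_def by blast
    note e1 = eigvec_fun[OF ev[unfolded A_def]]
    note e2 = eigvec_fun[OF ew[unfolded A_def]]
    have "(\<forall>i<m. v $ i = 0) \<or> (\<forall>i<m. w $ i = 0)"
      using two_eig[OF Rsym dpos Kpos poinc, of "\<lambda>j. v $ j" x "\<lambda>j. w $ j" y] e1(1) e2(1) False x y by auto
    then show False using e1(2) e2(2) by auto
  qed
qed




lemma deg_sum: "finite U \<Longrightarrow> real (deg E v U) = (\<Sum>y\<in>U. eind E v y)"
proof -
  assume f: "finite U"
  have "{u \<in> U. E v u} = U \<inter> Collect (E v)" by auto
  then show ?thesis unfolding deg_def eind_def using f by (simp add: sum.If_cases)
qed

lemma enum_of_props: assumes "finite U" shows "set (enum_of U) = U" "distinct (enum_of U)"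
proof -
  have "\<exists>xs. set xs = U \<and> distinct xs" using finite_distinct_list[OF assms] by blast
  then have "set (enum_of U) = U \<and> distinct (enum_of U)" unfolding enum_of_def by (rule someI_ex)
  then show "set (enum_of U) = U" "distinct (enum_of U)" by auto
qed

lemma spectral_from_cut:
  fixes E :: "'a \<Rightarrow> 'a \<Rightarrow> bool" and U :: "'a set" and \<phi> :: real
  assumes finU: "finite U" and Esym: "\<And>x y. E x y \<Longrightarrow> E y x" and \<phi>: "\<phi> > 0"
    and U2: "card U \<ge> 2" and degpos: "\<forall>v\<in>U. deg E v U > 0"
    and cut: "\<forall>S. S \<subseteq> U \<longrightarrow> \<phi> * card S * card (U - S) \<le> (\<Sum>x\<in>S. \<Sum>y\<in>U - S. eind E x y)"
  shows "lambda2 E U \<le> 1 - \<phi>^2 / 32"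
proof -
  define xs where "xs = enum_of U"
  have sxs: "set xs = U" and dxs: "distinct xs" unfolding xs_def using enum_of_props[OF finU] by auto
  define m where "m = length xs"
  have mU: "m = card U" unfolding m_def using distinct_card[OF dxs] sxs by simp
  define R where "R = (\<lambda>i j. E (xs ! i) (xs ! j))"
  have bij: "bij_betw ((!) xs) {..<m} U" unfolding m_def using bij_betw_nth[OF dxs refl sxs[symmetric]] by simp
  have inj: "inj_on ((!) xs) {..<m}" using bij by (rule bij_betw_imp_inj_on)
  have reidx: "\<And>g :: 'a \<Rightarrow> real. (\<Sum>y\<in>U. g y) = (\<Sum>j<m. g (xs ! j))"
    using sum.reindex_bij_betw[OF bij] by metis
  have Rsym: "\<And>i j. R i j \<Longrightarrow> R j i" unfolding R_def using Esym by auto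
  have ddeg: "\<And>i. i < m \<Longrightarrow> dd m R i = real (deg E (xs ! i) U)"
  proof -
    fix i assume i: "i < m"
    have "dd m R i = (\<Sum>j<m. eind E (xs ! i) (xs ! j))" unfolding dd_def rr_def R_def eind_def by simp
    also have "\<dots> = (\<Sum>y\<in>U. eind E (xs ! i) y)" using reidx by simp
    also have "\<dots> = real (deg E (xs ! i) U)" using deg_sum[OF finU] by simp
    finally show "dd m R i = real (deg E (xs ! i) U)" .
  qed
  have xsU: "\<And>i. i < m \<Longrightarrow> xs ! i \<in> U" unfolding m_def using sxs by auto
  have dpos: "\<And>i. i < m \<Longrightarrow> dd m R i > 0" using ddeg degpos xsU by simp
  have WMeq: "walk_matrix E U = WM m R"
    unfolding walk_matrix_def WM_def Let_def xs_def[symmetric] m_def[symmetric]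
    by (rule eq_matI) (auto simp: ddeg[unfolded R_def] R_def)
  define K where "K = 16 / \<phi>^2"
  have Kpos: "K > 0" unfolding K_def using \<phi> by simp
  have icut: "\<And>S. S \<subseteq> {..<m} \<Longrightarrow> \<phi> * real (card S) * real (card ({..<m} - S)) \<le> (\<Sum>x\<in>S. \<Sum>y\<in>{..<m} - S. rr R x y)"
  proof -
    fix S assume S: "S \<subseteq> {..<m}"
    define S' where "S' = (!) xs ` S"
    have S'U: "S' \<subseteq> U" unfolding S'_def using S xsU by auto
    have injS: "inj_on ((!) xs) S" using inj S by (rule inj_on_subset)
    have injS2: "inj_on ((!) xs) ({..<m} - S)" using inj by (rule inj_on_subset) auto
    have cS: "card S' = card S" unfolding S'_def using injS by (rule card_image)
    have US: "U - S' = (!) xs ` ({..<m} - S)"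
    proof -
      have "U = (!) xs ` {..<m}" using bij by (simp add: bij_betw_def)
      then show ?thesis unfolding S'_def using inj S by (simp add: inj_on_image_set_diff)
    qed
    have cUS: "card (U - S') = card ({..<m} - S)" unfolding US using injS2 by (rule card_image)
    have "(\<Sum>x\<in>S'. \<Sum>y\<in>U - S'. eind E x y) = (\<Sum>x\<in>S. \<Sum>y\<in>U - S'. eind E (xs ! x) y)"
      unfolding S'_def using injS by (simp add: sum.reindex)
    also have "\<dots> = (\<Sum>x\<in>S. \<Sum>y\<in>{..<m} - S. eind E (xs ! x) (xs ! y))"
      unfolding US using injS2 by (simp add: sum.reindex)
    also have "\<dots> = (\<Sum>x\<in>S. \<Sum>y\<in>{..<m} - S. rr R x y)" unfolding rr_def R_def eind_def by simp
    finally have eq: "(\<Sum>x\<in>S'. \<Sum>y\<in>U - S'. eind E x y) = (\<Sum>x\<in>S. \<Sum>y\<in>{..<m} - S. rr R x y)" .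
    show "\<phi> * real (card S) * real (card ({..<m} - S)) \<le> (\<Sum>x\<in>S. \<Sum>y\<in>{..<m} - S. rr R x y)"
      using cut S'U cS cUS eq by metis
  qed
  have poinc: "\<And>f. Ld m R f = 0 \<Longrightarrow> Bd m R f f \<le> K * Qf m R f"
  proof -
    fix f assume L0: "Ld m R f = 0"
    have rnn: "\<And>x y. rr R x y \<ge> 0" and rle: "\<And>x y. rr R x y \<le> 1" unfolding rr_def by auto
    have mean0: "(\<Sum>x\<in>{..<m}. (\<Sum>y\<in>{..<m}. rr R x y) * f x) = 0" using L0 unfolding Ld_def dd_def by simp
    have "\<phi>^2 * (\<Sum>x\<in>{..<m}. (\<Sum>y\<in>{..<m}. rr R x y) * (f x)^2) \<le> 16 * (\<Sum>x\<in>{..<m}. \<Sum>y\<in>{..<m}. rr R x y * (f y - f x)^2)"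
      by (rule poincare[OF _ \<phi> rnn rle icut mean0]) auto
    then have "\<phi>^2 * Bd m R f f \<le> 16 * Qf m R f" unfolding Bd_def Qf_def dd_def by (simp add: power2_eq_square mult.assoc)
    then have "Bd m R f f \<le> 16 * Qf m R f / \<phi>^2" using \<phi> by (simp add: field_simps)
    then show "Bd m R f f \<le> K * Qf m R f" unfolding K_def by simp
  qed
  have m2: "m \<ge> 2" using U2 mU by simp
  have "eigenvalues_desc (WM m R) ! 1 \<le> 1 - 1 / (2 * K)" by (rule eig_gap[OF Rsym dpos Kpos poinc m2])
  moreover have "1 / (2 * K) = \<phi>^2 / 32" unfolding K_def by simp
  ultimately show ?thesis unfolding lambda2_def WMeq by simp
qed


theorem lemma2p11:
  fixes E :: "'a \<Rightarrow> 'a \<Rightarrow> bool" and V :: "'a set" and \<delta> :: real and n :: nat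
  assumes "0 < \<delta>" and "\<delta> \<le> 1"
    and "simple_graph E V" and "card V = n"
    and "\<forall>v\<in>V. real (deg E v V) \<ge> \<delta> * real n"
  shows "\<exists>k Vs. primary_decomposition E V \<delta> k Vs"
proof -
  note \<delta> = assms(1,2)
  have fin: "finite V" and Esym: "\<And>x y. E x y \<Longrightarrow> E y x" and Eirr: "\<And>x. \<not> E x x"
    using assms(3) unfolding simple_graph_def by auto
  show ?thesis
  proof (cases "V = {}")
    case True
    have "primary_decomposition E V \<delta> 0 (\<lambda>_. {})"
      unfolding primary_decomposition_def using True \<delta> by simp
    then show ?thesis by blast
  next
    case False
    have npos: "card V > 0" using False fin by (simp add: card_gt_0_iff)
    have mindeg: "\<forall>v\<in>V. \<delta> * card V \<le> (\<Sum>y\<in>V. eind E v y)"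
      using assms(4,5) deg_sum[OF fin] by simp
    obtain c N where cN: "\<forall>x\<in>V. c x < N" and props: "\<forall>a<N. lpart V c a \<noteq> {} \<longrightarrow>
            \<delta> * card V / 2 \<le> card (lpart V c a) \<and>
            (\<forall>v\<in>lpart V c a. \<delta>^2 / 2 * card V \<le> (\<Sum>y\<in>lpart V c a. eind E v y)) \<and>
            (\<forall>S. S \<subseteq> lpart V c a \<longrightarrow> \<delta>^2/4 * card S * card (lpart V c a - S) \<le> eedge E S (lpart V c a - S))"
      using comb_exists[where \<phi>="\<delta>^2/4", OF fin Esym Eirr \<delta> refl mindeg] by blast
    define L where "L = {a\<in>{..<N}. lpart V c a \<noteq> {}}"
    have finL: "finite L" unfolding L_def by auto
    define ls where "ls = sorted_list_of_set L"
    have sls: "set ls = L" and dls: "distinct ls" unfolding ls_def using finL by auto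
    define k where "k = length ls"
    define Vs where "Vs = (\<lambda>i. lpart V c (ls ! i))"
    have lsL: "\<And>i. i < k \<Longrightarrow> ls ! i \<in> L" unfolding k_def using sls by auto
    have Vsprops: "\<And>i. i < k \<Longrightarrow> Vs i \<noteq> {} \<and> Vs i \<subseteq> V \<and>
            \<delta> * card V / 2 \<le> card (Vs i) \<and>
            (\<forall>v\<in>Vs i. \<delta>^2 / 2 * card V \<le> (\<Sum>y\<in>Vs i. eind E v y)) \<and>
            (\<forall>S. S \<subseteq> Vs i \<longrightarrow> \<delta>^2/4 * card S * card (Vs i - S) \<le> eedge E S (Vs i - S))"
    proof -
      fix i assume i: "i < k"
      have a: "ls ! i < N" and ne: "lpart V c (ls ! i) \<noteq> {}" using lsL[OF i] unfolding L_def by auto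
      have pr: "\<delta> * card V / 2 \<le> card (lpart V c (ls ! i)) \<and>
            (\<forall>v\<in>lpart V c (ls ! i). \<delta>^2 / 2 * card V \<le> (\<Sum>y\<in>lpart V c (ls ! i). eind E v y)) \<and>
            (\<forall>S. S \<subseteq> lpart V c (ls ! i) \<longrightarrow> \<delta>^2/4 * card S * card (lpart V c (ls ! i) - S) \<le> eedge E S (lpart V c (ls ! i) - S))"
        using props a ne by blast
      have sub: "lpart V c (ls ! i) \<subseteq> V" unfolding lpart_def by auto
      show "?thesis i" unfolding Vs_def using pr sub ne by blast
    qed
    have finVs: "\<And>i. i < k \<Longrightarrow> finite (Vs i)" using Vsprops fin by (meson rev_finite_subset)
    have P1: "\<forall>i<k. Vs i \<noteq> {} \<and> Vs i \<subseteq> V" using Vsprops by blast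
    have P2: "(\<Union>i<k. Vs i) = V"
    proof
      show "(\<Union>i<k. Vs i) \<subseteq> V" using P1 by blast
      show "V \<subseteq> (\<Union>i<k. Vs i)"
      proof
        fix x assume x: "x \<in> V"
        have "c x \<in> L" unfolding L_def lpart_def using x cN by auto
        then obtain i where i: "i < k" "ls ! i = c x" unfolding k_def using sls by (metis in_set_conv_nth)
        then have "x \<in> Vs i" unfolding Vs_def lpart_def using x by auto
        then show "x \<in> (\<Union>i<k. Vs i)" using i by auto
      qed
    qed
    have P3: "\<forall>i<k. \<forall>j<k. i \<noteq> j \<longrightarrow> Vs i \<inter> Vs j = {}"
    proof (intro allI impI)
      fix i j assume "i < k" "j < k" "i \<noteq> j"
      then have "ls ! i \<noteq> ls ! j" using dls unfolding k_def by (simp add: nth_eq_iff_index_eq)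
      then show "Vs i \<inter> Vs j = {}" unfolding Vs_def lpart_def by auto
    qed
    have P4: "real k \<le> 2 / \<delta>"
    proof -
      have "card V = card (\<Union>i<k. Vs i)" using P2 by simp
      also have "\<dots> = (\<Sum>i<k. card (Vs i))"
        using finVs P3 by (intro card_UN_disjoint) auto
      finally have cs: "real (card V) = (\<Sum>i<k. real (card (Vs i)))" by simp
      have "real k * (\<delta> * card V / 2) = (\<Sum>i<k. \<delta> * card V / 2)" by simp
      also have "\<dots> \<le> (\<Sum>i<k. real (card (Vs i)))" using Vsprops by (intro sum_mono) auto
      finally have "real k * (\<delta> * card V / 2) \<le> real (card V)" using cs by simp
      then have "(real k * \<delta> / 2) * real (card V) \<le> 1 * real (card V)" by (simp add: algebra_simps)
      moreover have "real (card V) > 0" using npos by simp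
      ultimately have "real k * \<delta> / 2 \<le> 1" by (simp only: mult_le_cancel_right)
      then show ?thesis using \<delta> by (simp add: field_simps)
    qed
    have P5: "\<forall>i<k. real (card (Vs i)) \<ge> \<delta> * real (card V) / 2" using Vsprops by blast
    have d4: "\<delta>^4 \<le> \<delta>^2" using \<delta> by (simp add: power_decreasing)
    have P6: "\<forall>i<k. \<forall>v\<in>Vs i. real (deg E v (Vs i)) \<ge> \<delta> ^ 4 * real (card V) / 40"
    proof (intro allI impI ballI)
      fix i v assume i: "i < k" and v: "v \<in> Vs i"
      from Vsprops[OF i] have "\<forall>v\<in>Vs i. \<delta>^2 / 2 * card V \<le> (\<Sum>y\<in>Vs i. eind E v y)" by blast
      then have "\<delta>^2 / 2 * card V \<le> (\<Sum>y\<in>Vs i. eind E v y)" using v by blast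
      also have "\<dots> = real (deg E v (Vs i))" by (rule deg_sum[symmetric]) (rule finVs[OF i])
      finally have "\<delta>^2 / 2 * card V \<le> real (deg E v (Vs i))" .
      moreover have "\<delta> ^ 4 * real (card V) / 40 \<le> \<delta>^2 / 2 * card V"
      proof -
        have "0 \<le> \<delta>^2" by simp
        then have "\<delta> ^ 4 / 40 \<le> \<delta>^2 / 2" using d4 by linarith
        then have "\<delta> ^ 4 / 40 * real (card V) \<le> \<delta>^2 / 2 * real (card V)" by (rule mult_right_mono) simp
        then show ?thesis by simp
      qed
      ultimately show "real (deg E v (Vs i)) \<ge> \<delta> ^ 4 * real (card V) / 40" by linarith
    qed
    have P7: "\<forall>i<k. spectral_gap E (Vs i) \<ge> \<delta> ^ 10 / 2 ^ 22"
    proof (intro allI impI)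
      fix i assume i: "i < k"
      define U where "U = Vs i"
      have finU: "finite U" unfolding U_def using finVs[OF i] .
      have degb: "\<forall>v\<in>U. \<delta>^2 / 2 * card V \<le> real (deg E v U)"
        using Vsprops[OF i] deg_sum[OF finU] unfolding U_def by simp
      have pos: "\<delta>^2 / 2 * card V > 0" using \<delta> npos by simp
      have degpos: "\<forall>v\<in>U. deg E v U > 0"
      proof
        fix v assume "v \<in> U"
        then have "real (deg E v U) > 0" using degb pos by fastforce
        then show "deg E v U > 0" by simp
      qed
      have U2: "card U \<ge> 2"
      proof -
        obtain v where v: "v \<in> U" using Vsprops[OF i] unfolding U_def by blast
        have "deg E v U > 0" using degpos v by blast
        then have "{u\<in>U. E v u} \<noteq> {}" unfolding deg_def by (metis card.empty less_irrefl)
        then obtain u where u: "u \<in> U" "E v u" by blast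
        have "u \<noteq> v" using u Eirr by auto
        then have "card {u, v} = 2" by simp
        moreover have "card {u, v} \<le> card U" using u v finU by (intro card_mono) auto
        ultimately show ?thesis by simp
      qed
      have cut: "\<forall>S. S \<subseteq> U \<longrightarrow> \<delta>^2/4 * card S * card (U - S) \<le> (\<Sum>x\<in>S. \<Sum>y\<in>U - S. eind E x y)"
        using Vsprops[OF i] unfolding U_def eedge_def by blast
      have "lambda2 E U \<le> 1 - (\<delta>^2/4)^2 / 32"
      proof (rule spectral_from_cut[OF finU Esym _ U2 degpos cut])
        have "\<delta>^2 > 0" using \<delta>(1) by (rule zero_less_power)
        then show "\<delta>^2/4 > 0" by simp
      qed
      then have "spectral_gap E U \<ge> (\<delta>^2/4)^2 / 32" unfolding spectral_gap_def by simp
      moreover have "\<delta> ^ 10 / 2 ^ 22 \<le> (\<delta>^2/4)^2 / 32"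
      proof -
        have a: "\<delta> ^ 10 \<le> \<delta> ^ 4" using \<delta> by (simp add: power_decreasing)
        have e: "(\<delta>^2/4)^2 / 32 = \<delta>^4 / 512"
          by (simp add: power_divide flip: power_mult)
        have "\<delta> ^ 10 / 2 ^ 22 \<le> \<delta> ^ 4 / 2 ^ 22" using a by (rule divide_right_mono) simp
        also have "\<delta> ^ 4 / 2 ^ 22 \<le> \<delta> ^ 4 / 512" by (rule divide_left_mono) auto
        finally show ?thesis unfolding e .
      qed
      ultimately show "spectral_gap E (Vs i) \<ge> \<delta> ^ 10 / 2 ^ 22" unfolding U_def by linarith
    qed
    have "primary_decomposition E V \<delta> k Vs"
      unfolding primary_decomposition_def using P1 P2 P3 P4 P5 P6 P7 by blast
    then show ?thesis by blast
  qed
qed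


end
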